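(* Let $t\ge0$, $D\ge1$, $(\tau_1,\dots,\tau_{D-1})\in\triangle_T^{(D-1)}$, $\mathrm{sgn}\in\{+,-\}^D$ and $(r^+,r^-)\in\mathcal S^2$, and let $r_f=(r_f^+,r_f^-)$ be the final state determined by $(r^+,r^-)$, $D$ and $\mathrm{sgn}$. Then $$A^{D,\mathrm{sgn}}_{(r^+,r^-)}\big(t,[\tau_1,\dots,\tau_{D-1},T-\tau_1-\dots-\tau_{D-1}]\big)=A^{D-1,\mathrm{sgn}_{1:D-1}}_{(r^+,r^-)}\big(t,[\tau_1,\dots,\tau_{D-1}]\big)\Big(-i\langle r_f^+|H_0|\hat r_f^+\rangle\,\delta^+_{\mathrm{sgn}_D}+i\langle\hat r_f^-|H_0|r_f^-\rangle\,\delta^-_{\mathrm{sgn}_D}\Big),$$ where $\mathrm{sgn}_{1:D-1}$ consists of the first $D-1$ entries of $\mathrm{sgn}$, and $\delta^{\pm}_{\mathrm{sgn}_D}$ equals $1$ if $\mathrm{sgn}_D=\pm$ and $0$ otherwise.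
   Context: Let $\mathcal S=\{-1,+1\}$, $\{|-1\rangle,|+1\rangle\}$ an orthonormal basis of $\mathbb C^2$, $H_0$ a Hermitian operator on $\mathbb C^2$, $\rho_s(0)$ a $2\times2$ complex matrix, and $T>0$. Let $\tilde\eta(\tau)=\frac1\pi\int_0^\infty J(\omega)(\coth(\beta\omega/2)\cos\omega\tau-i\sin\omega\tau)d\omega$ with $\beta>0$, $J(\omega)=\frac\pi2\sum_j\frac{c_j^2}{m_j\omega_j}\delta(\omega-\omega_j)$ ($\omega_j>0$); $\tilde\eta$ is continuous and $z^*$ is complex conjugation. For $a\in\mathcal S$ let $\hat a=-a$; for $r=(r^+,r^-)\in\mathcal S^2$ let $E(r)=\langle r^+|H_0|r^+\rangle-\langle r^-|H_0|r^-\rangle$. For $L>0$, $D\ge0$: $\triangle_L^{(D)}=\{(\tau_1,\dots,\tau_D):\tau_k>0,\sum\tau_k<L\}$ (a single point if $D=0$, integration over it meaning evaluation). Path segments: given $r_0\in\mathcal S^2$, $D\ge0$, $\mathrm{sgn}\in\{+,-\}^D$, define $r_1,\dots,r_D$ by: $r_j$ is $r_{j-1}$ with its $+$ component flipped ($a\mapsto\hat a$) if $\mathrm{sgn}_j=+$, or its $-$ component flipped if $\mathrm{sgn}_j=-$; the final state is $r_f=r_D$. For $\boldsymbol\tau\in\triangle_L^{(D)}$ the path segment on $[0,L)$ equals $r_d$ on $[\sum_{k\le d}\tau_k,\sum_{k\le d+1}\tau_k)$ ($0\le d<D$) and $r_D$ on $[\sum_{k\le D}\tau_k,L)$. Its flip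 factors are $V_j=-i\langle r_j^+|H_0|r_{j-1}^+\rangle$ if $\mathrm{sgn}_j=+$ and $V_j=i\langle r_{j-1}^-|H_0|r_j^-\rangle$ if $\mathrm{sgn}_j=-$; its piece lengths are $\ell_0=\tau_1$, $\ell_j=\tau_{j+1}$ ($1\le j<D$), $\ell_D=L-\sum\tau_k$ ($\ell_0=L$ if $D=0$). For $t\ge0$ let $h=(h^+,h^-)$ be the path segment on $[0,T)$ with data $(r_0,D,\mathrm{sgn},\boldsymbol\tau)$ and $Y(h)=\prod_{j=0}^De^{-iE(r_j)\ell_j}\prod_{j=1}^DV_j$. For $\tilde D\ge0$, $\tilde r_0\in\mathcal S^2$, $\widetilde{\mathrm{sgn}}\in\{+,-\}^{\tilde D}$, $\tilde{\boldsymbol\tau}\in\triangle_t^{(\tilde D)}$, let $g=(g^+,g^-)$ be the path segment on $[0,t)$ with these data (states $\tilde r_j$, flip factors $\tilde V_j$, lengths $\tilde\ell_j$) and $X(g)=\langle\tilde r_0^+|\rho_s(0)|\tilde r_0^-\rangle\prod_{j=0}^{\tilde D}e^{-iE(\tilde r_j)\tilde\ell_j}\prod_{j=1}^{\tilde D}\tilde V_j$. Let $Z(g,h)=-\int_0^tdx_1\int_{\max(0,x_1-T)}^{x_1}dx_2\,(g^+(x_1)-g^-(x_1))(g^+(x_2)\tilde\eta(x_1-x_2)-g^-(x_2)\tilde\eta^*(x_1-x_2))-\int_t^{t+T}dx_1\int_{\max(0,x_1-T)}^{t}dx_2\,(h^+(x_1-t)-h^-(x_1-t))(g^+(x_2)\tilde\eta(x_1-x_2)-g^-(x_2)\tilde\eta^*(x_1-x_2))-\int_0^Tdx_1\int_0^{x_1}dx_2\,(h^+(x_1)-h^-(x_1))(h^+(x_2)\tilde\eta(x_1-x_2)-h^-(x_2)\tilde\eta^*(x_1-x_2))$.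 For $\boldsymbol\tau\in\triangle_T^{(D)}$: $A^{D,\mathrm{sgn}}_{r_0}(t,[\tau_1,\dots,\tau_D]):=\sum_{\tilde D=0}^\infty\sum_{\tilde r_0\in\mathcal S^2}\sum_{\widetilde{\mathrm{sgn}}\in\{+,-\}^{\tilde D}}\int_{\triangle_t^{(\tilde D)}}X(g)\,\mathbf 1[\tilde r_{\tilde D}=r_0]\,Y(h)\,e^{Z(g,h)}\,d\tilde{\boldsymbol\tau}$. For $\boldsymbol\tau$ in the boundary $\partial\triangle_T^{(D)}$, $A^{D,\mathrm{sgn}}_{r_0}(t,\boldsymbol\tau)$ is defined as the limit of $A^{D,\mathrm{sgn}}_{r_0}(t,\boldsymbol\tau')$ as $\boldsymbol\tau'\to\boldsymbol\tau$ within $\triangle_T^{(D)}$ (this limit exists). *)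

theory Defs
  imports "HOL-Analysis.Analysis"
begin

text \<open>Spin values S = {-1,+1}; a state r = (r+, r-) is a pair of ints in S x S.
  Matrices on C^2 in the basis |-1>, |+1> are given by their entries
  M a b = <a|M|b> for a b in S. A sign sequence sgn in {+,-}^D is a bool list
  (True = +, False = -).\<close>

definition spins :: "int set" where
  "spins = {-1, 1}"

definition hat :: "int \<Rightarrow> int" where
  "hat a = - a"

definition Eng :: "(int \<Rightarrow> int \<Rightarrow> complex) \<Rightarrow> int \<times> int \<Rightarrow> complex" where
  "Eng H r = H (fst r) (fst r) - H (snd r) (snd r)"

text \<open>Bath correlation function: J(w) = pi/2 sum_j c_j^2/(m_j w_j) delta(w - w_j),
  so the integral collapses to a finite sum over the modes j in the finite set Jm.\<close>
definition eta :: "real \<Rightarrow> 'j set \<Rightarrow> ('j \<Rightarrow> real) \<Rightarrow> ('j \<Rightarrow> real) \<Rightarrow> ('j \<Rightarrow> real)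
                   \<Rightarrow> real \<Rightarrow> complex" where
  "eta \<beta> Jm c m \<omega> \<tau> = (\<Sum>j\<in>Jm. complex_of_real (1 / pi * (pi / 2 * (c j)\<^sup>2 / (m j * \<omega> j))) *
      (complex_of_real (cosh (\<beta> * \<omega> j / 2) / sinh (\<beta> * \<omega> j / 2) * cos (\<omega> j * \<tau>))
       - \<i> * complex_of_real (sin (\<omega> j * \<tau>))))"

text \<open>Open tsimplex of dimension n, as extensional functions on {..<n}
  (tau k is tau_(k+1)); for n = 0 it is the single point.\<close>
definition tsimplex :: "real \<Rightarrow> nat \<Rightarrow> (nat \<Rightarrow> real) set" where
  "tsimplex L n = {\<tau>. \<tau> \<in> extensional {..<n} \<and> (\<forall>k<n. 0 < \<tau> k) \<and> (0 < n \<longrightarrow> sum \<tau> {..<n} < L)}"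

definition flip :: "bool \<Rightarrow> int \<times> int \<Rightarrow> int \<times> int" where
  "flip s r = (if s then (hat (fst r), snd r) else (fst r, hat (snd r)))"

fun states :: "int \<times> int \<Rightarrow> bool list \<Rightarrow> nat \<Rightarrow> int \<times> int" where
  "states r0 sg 0 = r0"
| "states r0 sg (Suc j) = flip (sg ! j) (states r0 sg j)"

definition final_state :: "int \<times> int \<Rightarrow> bool list \<Rightarrow> int \<times> int" where
  "final_state r0 sg = states r0 sg (length sg)"

text \<open>The path segment: on [sum_(k<=d) tau_k, sum_(k<=d+1) tau_k) it equals r_d.\<close>
definition path_seg :: "int \<times> int \<Rightarrow> bool list \<Rightarrow> (nat \<Rightarrow> real) \<Rightarrow> real \<Rightarrow> int \<times> int" where
  "path_seg r0 sg \<tau> x = states r0 sg (card {j \<in> {1..length sg}. (\<Sum>k<j. \<tau> k) \<le> x})"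

definition flip_factor :: "(int \<Rightarrow> int \<Rightarrow> complex) \<Rightarrow> int \<times> int \<Rightarrow> bool list \<Rightarrow> nat \<Rightarrow> complex" where
  "flip_factor H r0 sg j =
     (if sg ! (j - 1)
      then - \<i> * H (fst (states r0 sg j)) (fst (states r0 sg (j - 1)))
      else \<i> * H (snd (states r0 sg (j - 1))) (snd (states r0 sg j)))"

definition piece_len :: "real \<Rightarrow> bool list \<Rightarrow> (nat \<Rightarrow> real) \<Rightarrow> nat \<Rightarrow> real" where
  "piece_len L sg \<tau> j = (if j < length sg then \<tau> j else L - (\<Sum>k<length sg. \<tau> k))"

definition seg_amp :: "(int \<Rightarrow> int \<Rightarrow> complex) \<Rightarrow> real \<Rightarrow> int \<times> int \<Rightarrow> bool list \<Rightarrow> (nat \<Rightarrow> real) \<Rightarrow> complex" where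
  "seg_amp H L r0 sg \<tau> =
     (\<Prod>j\<in>{0..length sg}. exp (- \<i> * Eng H (states r0 sg j) * complex_of_real (piece_len L sg \<tau> j)))
     * (\<Prod>j\<in>{1..length sg}. flip_factor H r0 sg j)"

definition Yf :: "(int \<Rightarrow> int \<Rightarrow> complex) \<Rightarrow> real \<Rightarrow> int \<times> int \<Rightarrow> bool list \<Rightarrow> (nat \<Rightarrow> real) \<Rightarrow> complex" where
  "Yf H T r0 sg \<tau> = seg_amp H T r0 sg \<tau>"

definition Xf :: "(int \<Rightarrow> int \<Rightarrow> complex) \<Rightarrow> (int \<Rightarrow> int \<Rightarrow> complex) \<Rightarrow> real \<Rightarrow> int \<times> int \<Rightarrow> bool list
                  \<Rightarrow> (nat \<Rightarrow> real) \<Rightarrow> complex" where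
  "Xf H \<rho> t r0 sg \<tau> = \<rho> (fst r0) (snd r0) * seg_amp H t r0 sg \<tau>"

definition pdiff :: "int \<times> int \<Rightarrow> complex" where
  "pdiff r = of_int (fst r) - of_int (snd r)"

definition pker :: "(real \<Rightarrow> complex) \<Rightarrow> int \<times> int \<Rightarrow> real \<Rightarrow> complex" where
  "pker \<eta> r s = of_int (fst r) * \<eta> s - of_int (snd r) * cnj (\<eta> s)"

definition Zf :: "(real \<Rightarrow> complex) \<Rightarrow> real \<Rightarrow> real \<Rightarrow> (real \<Rightarrow> int \<times> int) \<Rightarrow> (real \<Rightarrow> int \<times> int) \<Rightarrow> complex" where
  "Zf \<eta> T t g h =
     - integral {0..t} (\<lambda>x1. integral {max 0 (x1 - T)..x1}
          (\<lambda>x2. pdiff (g x1) * pker \<eta> (g x2) (x1 - x2)))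
     - integral {t..t + T} (\<lambda>x1. integral {max 0 (x1 - T)..t}
          (\<lambda>x2. pdiff (h (x1 - t)) * pker \<eta> (g x2) (x1 - x2)))
     - integral {0..T} (\<lambda>x1. integral {0..x1}
          (\<lambda>x2. pdiff (h x1) * pker \<eta> (h x2) (x1 - x2)))"

definition Aamp :: "(int \<Rightarrow> int \<Rightarrow> complex) \<Rightarrow> (int \<Rightarrow> int \<Rightarrow> complex) \<Rightarrow> (real \<Rightarrow> complex) \<Rightarrow> real
                   \<Rightarrow> bool list \<Rightarrow> int \<times> int \<Rightarrow> real \<Rightarrow> (nat \<Rightarrow> real) \<Rightarrow> complex" where
  "Aamp H \<rho> \<eta> T sg r0 t \<tau> =
     (\<Sum>Dt. \<Sum>rt0\<in>spins \<times> spins. \<Sum>sgt\<in>{xs :: bool list. length xs = Dt}.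
        LINT \<tau>t : tsimplex t Dt | PiM {..<Dt} (\<lambda>_. lborel).
          Xf H \<rho> t rt0 sgt \<tau>t
          * (if final_state rt0 sgt = r0 then 1 else 0)
          * Yf H T r0 sg \<tau>
          * exp (Zf \<eta> T t (path_seg rt0 sgt \<tau>t) (path_seg r0 sg \<tau>)))"

end

theory Submission
  imports Defs
begin


lemma hat_spins: "a \<in> spins \<Longrightarrow> hat a \<in> spins"
  by (auto simp: spins_def hat_def)

lemma hat_hat[simp]: "hat (hat a) = a" by (simp add: hat_def)

lemma flip_spins: "r \<in> spins \<times> spins \<Longrightarrow> flip s r \<in> spins \<times> spins"
  by (cases r) (auto simp: flip_def hat_spins)

lemma states_spins: "r0 \<in> spins \<times> spins \<Longrightarrow> states r0 sg j \<in> spins \<times> spins"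
  by (induction j) (auto intro: flip_spins)

lemma path_seg_spins: "r0 \<in> spins \<times> spins \<Longrightarrow> path_seg r0 sg \<tau> x \<in> spins \<times> spins"
  unfolding path_seg_def by (rule states_spins)

lemma states_cong: "(\<And>k. k < N \<Longrightarrow> xs ! k = ys ! k) \<Longrightarrow> states r0 xs N = states r0 ys N"
  by (induction N) auto

lemma pdiff_bound: "r \<in> spins \<times> spins \<Longrightarrow> norm (pdiff r) \<le> 2"
  by (cases r) (auto simp: pdiff_def spins_def)

lemma pker_bound:
  assumes "r \<in> spins \<times> spins" "\<And>s. norm (\<eta> s) \<le> Eb"
  shows "norm (pker \<eta> r s) \<le> 2 * Eb"
proof -
  have "norm (pker \<eta> r s) \<le> norm (of_int (fst r) * \<eta> s) + norm (of_int (snd r) * cnj (\<eta> s))"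
    unfolding pker_def by (rule norm_triangle_ineq4)
  also have "\<dots> \<le> Eb + Eb"
    using assms by (cases r) (auto simp: spins_def norm_mult)
  finally show ?thesis by simp
qed

lemma hk_bound:
  fixes f :: "real \<Rightarrow> 'a::euclidean_space"
  assumes "0 \<le> B" "\<And>x. x \<in> {a..b} \<Longrightarrow> norm (f x) \<le> B" "b - a \<le> L" "0 \<le> L"
  shows "norm (integral {a..b} f) \<le> B * L"
proof (cases "f integrable_on {a..b}")
  case True
  then have "norm (integral {a..b} f) \<le> B * Henstock_Kurzweil_Integration.content {a..b}"
    using has_integral_bound_real[of B "{}" f "integral {a..b} f" a b] assms
    by (auto simp: has_integral_integral)
  also have "\<dots> \<le> B * L"
    using assms by (intro mult_left_mono) (auto simp: content_real_if)
  finally show ?thesis .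
next
  case False
  then show ?thesis using assms by (simp add: not_integrable_integral)
qed

lemma set_integrable_bdd:
  fixes f :: "'a \<Rightarrow> 'b::{banach,second_countable_topology}"
  assumes "A \<in> sets M" "emeasure M A < \<infinity>" "f \<in> borel_measurable M"
    "\<And>x. x \<in> A \<Longrightarrow> norm (f x) \<le> B"
  shows "set_integrable M A f"
  unfolding set_integrable_def
proof (rule Bochner_Integration.integrable_bound[where f="\<lambda>x. B * indicator A x"])
  show "integrable M (\<lambda>x. B * indicator A x)"
    using assms by (intro integrable_mult_right integrable_real_indicator) auto
  show "(\<lambda>x. indicator A x *\<^sub>R f x) \<in> borel_measurable M"
    using assms by measurable
  show "AE x in M. norm (indicator A x *\<^sub>R f x) \<le> norm (B * indicator A x)"
    using assms by (auto simp: indicator_def intro!: AE_I2 order_trans[OF _ abs_ge_self])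
qed



lemma meas_card:
  assumes "finite A" "\<And>j. j \<in> A \<Longrightarrow> Measurable.pred M (P j)"
  shows "(\<lambda>w. card {j\<in>A. P j w}) \<in> M \<rightarrow>\<^sub>M count_space UNIV"
  using assms
proof (induction A rule: finite_induct)
  case empty
  then show ?case by simp
next
  case (insert a A)
  have eq: "(\<lambda>w. card {j\<in>insert a A. P j w}) = (\<lambda>w. (\<lambda>i w. (if P a w then 1 else 0) + i) (card {j\<in>A. P j w}) w)"
  proof (rule ext)
    fix w
    have "{j\<in>insert a A. P j w} = (if P a w then insert a {j\<in>A. P j w} else {j\<in>A. P j w})"
      by auto
    then show "card {j\<in>insert a A. P j w} = (\<lambda>i w. (if P a w then 1 else 0) + i) (card {j\<in>A. P j w}) w"
      using insert.hyps by auto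
  qed
  show ?case unfolding eq
  proof (rule measurable_compose_countable[where f = "\<lambda>i w. (if P a w then 1 else 0) + i" and g = "\<lambda>w. card {j\<in>A. P j w}"])
    show "(\<lambda>w. card {j\<in>A. P j w}) \<in> M \<rightarrow>\<^sub>M count_space UNIV"
      using insert by auto
    fix i :: nat
    have "Measurable.pred M (P a)" using insert by auto
    then show "(\<lambda>w. (if P a w then 1 else 0) + i) \<in> M \<rightarrow>\<^sub>M count_space UNIV"
      by measurable
  qed
qed

lemma PiM_lborel_sets: "sets (Pi\<^sub>M I (\<lambda>_. lborel) \<Otimes>\<^sub>M lborel) = sets (Pi\<^sub>M I (\<lambda>_. borel) \<Otimes>\<^sub>M borel)"
  by (intro sets_pair_measure_cong sets_PiM_cong) auto

lemma PiM_lborel_sets1: "sets (Pi\<^sub>M I (\<lambda>_. lborel)) = sets (Pi\<^sub>M I (\<lambda>_. borel))"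
  by (intro sets_PiM_cong) auto

lemma path_seg_meas_param:
  "(\<lambda>(p,x). path_seg r0 sg p x) \<in> (Pi\<^sub>M {..<length sg} (\<lambda>_. borel :: real measure) \<Otimes>\<^sub>M (borel :: real measure)) \<rightarrow>\<^sub>M count_space UNIV"
proof -
  have "(\<lambda>w. card {j\<in>{1..length sg}. (\<Sum>k<j. fst w k) \<le> snd w})
      \<in> (Pi\<^sub>M {..<length sg} (\<lambda>_. borel :: real measure) \<Otimes>\<^sub>M (borel :: real measure)) \<rightarrow>\<^sub>M count_space UNIV"
  proof (rule meas_card)
    fix j assume j: "j \<in> {1..length sg}"
    have comp: "(\<lambda>w. fst w k) \<in> borel_measurable (Pi\<^sub>M {..<length sg} (\<lambda>_. borel :: real measure) \<Otimes>\<^sub>M (borel :: real measure))"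
      if "k \<in> {..<j}" for k
      apply measurable using that j by auto
    then have sm[measurable]: "(\<lambda>w. \<Sum>k\<in>{..<j}. fst w k) \<in> borel_measurable (Pi\<^sub>M {..<length sg} (\<lambda>_. borel :: real measure) \<Otimes>\<^sub>M (borel :: real measure))"
      using comp by (intro borel_measurable_sum) auto
    show "Measurable.pred (Pi\<^sub>M {..<length sg} (\<lambda>_. borel :: real measure) \<Otimes>\<^sub>M (borel :: real measure))
        (\<lambda>w. (\<Sum>k<j. fst w k) \<le> snd w)"
      unfolding pred_def by (rule borel_measurable_le) (rule sm, rule measurable_snd)
  qed simp
  from measurable_compose[OF this measurable_count_space[of "states r0 sg" UNIV]]
  show ?thesis unfolding path_seg_def case_prod_beta' .
qed

lemma path_seg_meas:
  "(\<lambda>x. path_seg r0 sg \<tau> x) \<in> borel \<rightarrow>\<^sub>M count_space UNIV"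
proof -
  have "(\<lambda>x. card {j\<in>{1..length sg}. (\<Sum>k<j. \<tau> k) \<le> x}) \<in> borel \<rightarrow>\<^sub>M count_space UNIV"
    by (rule meas_card) auto
  from measurable_compose[OF this measurable_count_space[of "states r0 sg" UNIV]]
  show ?thesis unfolding path_seg_def by simp
qed



lemma Icc_finite_measure: "emeasure lborel {a..b::real} < \<infinity>"
  using emeasure_lborel_cbox_finite[of a b] by simp

lemma Icc_finite_measure'[simp]: "emeasure lborel {a..b::real} < top"
  using Icc_finite_measure by simp

lemma cnt_meas: "g \<in> M \<rightarrow>\<^sub>M count_space UNIV \<Longrightarrow> (\<lambda>w. \<phi> (g w)) \<in> borel_measurable M"
  using measurable_compose[of g M "count_space UNIV" \<phi> borel]
  by (simp add: measurable_count_space_eq1)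

lemma pdiff_meas:
  fixes g :: "'a \<Rightarrow> int \<times> int"
  shows "g \<in> M \<rightarrow>\<^sub>M count_space UNIV \<Longrightarrow> (\<lambda>w. pdiff (g w)) \<in> borel_measurable M"
  by (rule cnt_meas)

lemma pker_meas:
  fixes g :: "'a \<Rightarrow> int \<times> int"
  assumes g: "g \<in> M \<rightarrow>\<^sub>M count_space UNIV" and s[measurable]: "s \<in> borel_measurable M"
    and eta[measurable]: "\<eta> \<in> borel_measurable borel"
  shows "(\<lambda>w. pker \<eta> (g w) (s w)) \<in> borel_measurable M"
proof -
  have [measurable]: "(\<lambda>w. complex_of_int (fst (g w))) \<in> borel_measurable M"
    "(\<lambda>w. complex_of_int (snd (g w))) \<in> borel_measurable M"
    using g by (auto intro: cnt_meas)
  have [measurable]: "cnj \<in> borel_measurable borel"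
    by (intro borel_measurable_continuous_onI continuous_intros)
  show ?thesis unfolding pker_def by measurable
qed



lemma inner_meas:
  fixes \<psi> :: "'a \<Rightarrow> real \<Rightarrow> 'b::{banach,second_countable_topology}"
  assumes psi[measurable]: "(\<lambda>(x1,x2). \<psi> x1 x2) \<in> borel_measurable (N \<Otimes>\<^sub>M borel)"
    and al[measurable]: "\<alpha> \<in> borel_measurable N" and be[measurable]: "\<beta> \<in> borel_measurable N"
  shows "(\<lambda>x1. LINT x2:{\<alpha> x1..\<beta> x1}|lborel. \<psi> x1 x2) \<in> borel_measurable N"
proof -
  have [measurable]: "Measurable.pred (N \<Otimes>\<^sub>M borel) (\<lambda>w. \<alpha> (fst w) \<le> snd w \<and> snd w \<le> \<beta> (fst w))"
    by measurable
  have "(\<lambda>w. indicator {\<alpha> (fst w)..\<beta> (fst w)} (snd w) *\<^sub>R \<psi> (fst w) (snd w)) \<in> borel_measurable (N \<Otimes>\<^sub>M borel)"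
  proof -
    have eq: "(\<lambda>w. indicator {\<alpha> (fst w)..\<beta> (fst w)} (snd w) *\<^sub>R \<psi> (fst w) (snd w))
      = (\<lambda>w. (if \<alpha> (fst w) \<le> snd w \<and> snd w \<le> \<beta> (fst w) then 1 else 0) *\<^sub>R (\<lambda>(x1,x2). \<psi> x1 x2) w)"
      by (auto simp: indicator_def fun_eq_iff)
    show ?thesis unfolding eq by measurable
  qed
  then have "(\<lambda>(x1,x2). indicator {\<alpha> x1..\<beta> x1} x2 *\<^sub>R \<psi> x1 x2) \<in> borel_measurable (N \<Otimes>\<^sub>M lborel)"
    by (subst measurable_cong_sets[OF sets_pair_measure_cong[OF refl sets_lborel] refl]) (simp add: case_prod_beta')
  from lborel.borel_measurable_lebesgue_integral[OF this]
  show ?thesis unfolding set_lebesgue_integral_def by simp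
qed

lemma L_eq:
  fixes c :: "real \<Rightarrow> complex" and \<psi> :: "real \<Rightarrow> real \<Rightarrow> complex"
  assumes c[measurable]: "c \<in> borel_measurable borel"
    and psi[measurable]: "(\<lambda>(x1,x2). \<psi> x1 x2) \<in> borel_measurable (borel \<Otimes>\<^sub>M borel)"
    and al[measurable]: "\<alpha> \<in> borel_measurable borel" and be[measurable]: "\<beta> \<in> borel_measurable borel"
    and cb: "\<And>x. norm (c x) \<le> Bc" and pb: "\<And>x y. norm (\<psi> x y) \<le> Bp"
    and L: "\<And>x. x \<in> {a..b} \<Longrightarrow> \<beta> x - \<alpha> x \<le> L" "0 \<le> L"
  shows "integral {a..b} (\<lambda>x1. integral {\<alpha> x1..\<beta> x1} (\<lambda>x2. c x1 * \<psi> x1 x2))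
       = (LINT x1:{a..b}|lborel. c x1 * (LINT x2:{\<alpha> x1..\<beta> x1}|lborel. \<psi> x1 x2))"
    and "(\<lambda>x1. LINT x2:{\<alpha> x1..\<beta> x1}|lborel. \<psi> x1 x2) \<in> borel_measurable borel"
    and "\<And>x1. x1 \<in> {a..b} \<Longrightarrow> norm (LINT x2:{\<alpha> x1..\<beta> x1}|lborel. \<psi> x1 x2) \<le> Bp * L"
proof -
  have Bp: "0 \<le> Bp" using pb[of 0 0] norm_ge_zero order_trans by blast
  have Bc: "0 \<le> Bc" using cb[of 0] norm_ge_zero order_trans by blast
  have slice[measurable]: "\<psi> x1 \<in> borel_measurable borel" for x1
    using measurable_Pair2[OF psi, of x1] by simp
  have si: "set_integrable lborel {\<alpha> x1..\<beta> x1} (\<psi> x1)" for x1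
    by (rule set_integrable_bdd[where B=Bp]) (auto simp: Icc_finite_measure pb)
  have si2: "set_integrable lborel {\<alpha> x1..\<beta> x1} (\<lambda>x2. c x1 * \<psi> x1 x2)" for x1
    by (rule set_integrable_bdd[where B="norm (c x1) * Bp"])
       (auto simp: Icc_finite_measure pb norm_mult intro!: mult_left_mono)
  have ieq: "(LINT x2:{\<alpha> x1..\<beta> x1}|lborel. \<psi> x1 x2) = integral {\<alpha> x1..\<beta> x1} (\<psi> x1)" for x1
    using set_borel_integral_eq_integral(2)[OF si[of x1]] by simp
  have inner: "integral {\<alpha> x1..\<beta> x1} (\<lambda>x2. c x1 * \<psi> x1 x2) = c x1 * (LINT x2:{\<alpha> x1..\<beta> x1}|lborel. \<psi> x1 x2)" for x1
    using set_borel_integral_eq_integral(2)[OF si2[of x1]] set_integral_mult_right[where a="c x1" and M=lborel] ieq[of x1] by simp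
  show meas: "(\<lambda>x1. LINT x2:{\<alpha> x1..\<beta> x1}|lborel. \<psi> x1 x2) \<in> borel_measurable borel"
    by (rule inner_meas) measurable
  show bnd: "norm (LINT x2:{\<alpha> x1..\<beta> x1}|lborel. \<psi> x1 x2) \<le> Bp * L" if "x1 \<in> {a..b}" for x1
    unfolding ieq by (rule hk_bound) (use Bp pb L that in auto)
  have so: "set_integrable lborel {a..b} (\<lambda>x1. c x1 * (LINT x2:{\<alpha> x1..\<beta> x1}|lborel. \<psi> x1 x2))"
  proof (rule set_integrable_bdd[where B="Bc * (Bp * L)"])
    show "(\<lambda>x1. c x1 * (LINT x2:{\<alpha> x1..\<beta> x1}|lborel. \<psi> x1 x2)) \<in> borel_measurable lborel"
      using meas by simp
  next
    fix x assume "x \<in> {a..b}"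
    then show "norm (c x * (LINT x2:{\<alpha> x..\<beta> x}|lborel. \<psi> x x2)) \<le> Bc * (Bp * L)"
      unfolding norm_mult using bnd cb Bc by (intro mult_mono) auto
  qed (auto simp: Icc_finite_measure)
  have "integral {a..b} (\<lambda>x1. integral {\<alpha> x1..\<beta> x1} (\<lambda>x2. c x1 * \<psi> x1 x2))
      = integral {a..b} (\<lambda>x1. c x1 * (LINT x2:{\<alpha> x1..\<beta> x1}|lborel. \<psi> x1 x2))"
    by (rule integral_cong) (rule inner)
  also have "\<dots> = (LINT x1:{a..b}|lborel. c x1 * (LINT x2:{\<alpha> x1..\<beta> x1}|lborel. \<psi> x1 x2))"
    using set_borel_integral_eq_integral(2)[OF so] by simp
  finally show "integral {a..b} (\<lambda>x1. integral {\<alpha> x1..\<beta> x1} (\<lambda>x2. c x1 * \<psi> x1 x2))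
       = (LINT x1:{a..b}|lborel. c x1 * (LINT x2:{\<alpha> x1..\<beta> x1}|lborel. \<psi> x1 x2))" .
qed



definition ZL1 :: "(real \<Rightarrow> complex) \<Rightarrow> real \<Rightarrow> real \<Rightarrow> (real \<Rightarrow> int \<times> int) \<Rightarrow> complex" where
  "ZL1 \<eta> T t g = (LINT x1:{0..t}|lborel. pdiff (g x1) * (LINT x2:{max 0 (x1 - T)..x1}|lborel. pker \<eta> (g x2) (x1 - x2)))"

definition ZL2 :: "(real \<Rightarrow> complex) \<Rightarrow> real \<Rightarrow> real \<Rightarrow> (real \<Rightarrow> int \<times> int) \<Rightarrow> (real \<Rightarrow> int \<times> int) \<Rightarrow> complex" where
  "ZL2 \<eta> T t g h = (LINT x1:{t..t + T}|lborel. pdiff (h (x1 - t)) * (LINT x2:{max 0 (x1 - T)..t}|lborel. pker \<eta> (g x2) (x1 - x2)))"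

definition ZL3 :: "(real \<Rightarrow> complex) \<Rightarrow> real \<Rightarrow> (real \<Rightarrow> int \<times> int) \<Rightarrow> complex" where
  "ZL3 \<eta> T h = (LINT x1:{0..T}|lborel. pdiff (h x1) * (LINT x2:{0..x1}|lborel. pker \<eta> (h x2) (x1 - x2)))"

lemma psi_meas:
  fixes g :: "real \<Rightarrow> int \<times> int"
  assumes g: "g \<in> borel \<rightarrow>\<^sub>M count_space UNIV" and eta: "\<eta> \<in> borel_measurable borel"
  shows "(\<lambda>(x1,x2). pker \<eta> (g x2) (x1 - x2)) \<in> borel_measurable (borel \<Otimes>\<^sub>M borel)"
proof -
  have "(\<lambda>w. g (snd w)) \<in> (borel \<Otimes>\<^sub>M borel) \<rightarrow>\<^sub>M count_space UNIV"
    by (rule measurable_compose[OF measurable_snd g])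
  from pker_meas[OF this _ eta, of "\<lambda>w. fst w - snd w"]
  show ?thesis by (simp add: case_prod_beta')
qed

lemma Zf_eq:
  fixes g h :: "real \<Rightarrow> int \<times> int"
  assumes g: "g \<in> borel \<rightarrow>\<^sub>M count_space UNIV" and h: "h \<in> borel \<rightarrow>\<^sub>M count_space UNIV"
    and gs: "\<And>x. g x \<in> spins \<times> spins" and hs: "\<And>x. h x \<in> spins \<times> spins"
    and eta: "\<eta> \<in> borel_measurable borel" and eb: "\<And>s. norm (\<eta> s) \<le> Eb"
    and t: "0 \<le> t" and T: "0 \<le> T"
  shows "Zf \<eta> T t g h = - ZL1 \<eta> T t g - ZL2 \<eta> T t g h - ZL3 \<eta> T h"
proof -
  have pg: "(\<lambda>x. pdiff (g x)) \<in> borel_measurable borel" using g by (rule pdiff_meas)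
  have ph: "(\<lambda>x. pdiff (h x)) \<in> borel_measurable borel" using h by (rule pdiff_meas)
  have ph': "(\<lambda>x. pdiff (h (x - t))) \<in> borel_measurable borel"
    using measurable_compose[OF _ ph, of "\<lambda>x. x - t"] by simp
  have e1: "integral {0..t} (\<lambda>x1. integral {max 0 (x1 - T)..x1} (\<lambda>x2. pdiff (g x1) * pker \<eta> (g x2) (x1 - x2)))
      = ZL1 \<eta> T t g"
    unfolding ZL1_def
    by (rule L_eq(1)[where c="\<lambda>x1. pdiff (g x1)" and \<psi>="\<lambda>x1 x2. pker \<eta> (g x2) (x1 - x2)"
        and \<alpha>="\<lambda>x1. max 0 (x1 - T)" and \<beta>="\<lambda>x1. x1" and Bc=2 and Bp="2*Eb" and L=t])
       (use pg psi_meas[OF g eta] pdiff_bound pker_bound gs hs eb t in auto)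
  have e2: "integral {t..t + T} (\<lambda>x1. integral {max 0 (x1 - T)..t} (\<lambda>x2. pdiff (h (x1 - t)) * pker \<eta> (g x2) (x1 - x2)))
      = ZL2 \<eta> T t g h"
    unfolding ZL2_def
    by (rule L_eq(1)[where c="\<lambda>x1. pdiff (h (x1 - t))" and \<psi>="\<lambda>x1 x2. pker \<eta> (g x2) (x1 - x2)"
        and \<alpha>="\<lambda>x1. max 0 (x1 - T)" and \<beta>="\<lambda>x1. t" and Bc=2 and Bp="2*Eb" and L=t])
       (use ph' psi_meas[OF g eta] pdiff_bound pker_bound gs hs eb t in auto)
  have e3: "integral {0..T} (\<lambda>x1. integral {0..x1} (\<lambda>x2. pdiff (h x1) * pker \<eta> (h x2) (x1 - x2)))
      = ZL3 \<eta> T h"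
    unfolding ZL3_def
    by (rule L_eq(1)[where c="\<lambda>x1. pdiff (h x1)" and \<psi>="\<lambda>x1 x2. pker \<eta> (h x2) (x1 - x2)"
        and \<alpha>="\<lambda>x1. 0" and \<beta>="\<lambda>x1. x1" and Bc=2 and Bp="2*Eb" and L=T])
       (use ph psi_meas[OF h eta] pdiff_bound pker_bound gs hs eb T in auto)
  show ?thesis unfolding Zf_def e1 e2 e3 by simp
qed



lemma ZL_param_meas:
  fixes G :: "'p \<Rightarrow> real \<Rightarrow> int \<times> int"
  assumes G: "(\<lambda>w. G (fst w) (snd w)) \<in> (N \<Otimes>\<^sub>M borel) \<rightarrow>\<^sub>M count_space UNIV"
    and h: "h \<in> borel \<rightarrow>\<^sub>M count_space UNIV" and eta: "\<eta> \<in> borel_measurable borel"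
  shows "(\<lambda>p. ZL1 \<eta> T t (G p)) \<in> borel_measurable N"
    and "(\<lambda>p. ZL2 \<eta> T t (G p) h) \<in> borel_measurable N"
proof -
  have G2: "(\<lambda>v. G (fst (fst v)) (snd v)) \<in> ((N \<Otimes>\<^sub>M borel) \<Otimes>\<^sub>M borel) \<rightarrow>\<^sub>M count_space UNIV"
  proof -
    have "(\<lambda>v. (fst (fst v), snd v)) \<in> ((N \<Otimes>\<^sub>M borel) \<Otimes>\<^sub>M borel) \<rightarrow>\<^sub>M (N \<Otimes>\<^sub>M borel)"
      by measurable
    from measurable_compose[OF this G] show ?thesis by simp
  qed
  have P2: "(\<lambda>v. pker \<eta> (G (fst (fst v)) (snd v)) (snd (fst v) - snd v)) \<in> borel_measurable ((N \<Otimes>\<^sub>M borel) \<Otimes>\<^sub>M borel)"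
    by (rule pker_meas[OF G2 _ eta]) measurable
  have I1: "(\<lambda>w. LINT x2:{max 0 (snd w - T)..snd w}|lborel. pker \<eta> (G (fst w) x2) (snd w - x2)) \<in> borel_measurable (N \<Otimes>\<^sub>M borel)"
    by (rule inner_meas) (use P2 in \<open>simp_all add: case_prod_beta'\<close>)
  have I2: "(\<lambda>w. LINT x2:{max 0 (snd w - T)..t}|lborel. pker \<eta> (G (fst w) x2) (snd w - x2)) \<in> borel_measurable (N \<Otimes>\<^sub>M borel)"
    by (rule inner_meas) (use P2 in \<open>simp_all add: case_prod_beta'\<close>)
  have PG: "(\<lambda>w. pdiff (G (fst w) (snd w))) \<in> borel_measurable (N \<Otimes>\<^sub>M borel)"
    using G by (rule pdiff_meas)
  have PH: "(\<lambda>w. pdiff (h (snd w - t))) \<in> borel_measurable (N \<Otimes>\<^sub>M borel)"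
  proof -
    have "(\<lambda>w. h (snd w - t)) \<in> (N \<Otimes>\<^sub>M borel) \<rightarrow>\<^sub>M count_space UNIV"
      by (rule measurable_compose[OF _ h]) measurable
    then show ?thesis by (rule pdiff_meas)
  qed
  show "(\<lambda>p. ZL1 \<eta> T t (G p)) \<in> borel_measurable N"
    unfolding ZL1_def
    by (rule inner_meas[where \<alpha>="\<lambda>_. 0" and \<beta>="\<lambda>_. t"]) (use PG I1 in \<open>simp_all add: case_prod_beta'\<close>)
  show "(\<lambda>p. ZL2 \<eta> T t (G p) h) \<in> borel_measurable N"
    unfolding ZL2_def
    by (rule inner_meas[where \<alpha>="\<lambda>_. t" and \<beta>="\<lambda>_. t + T"]) (use PH I2 in \<open>simp_all add: case_prod_beta'\<close>)
qed



lemma set_DCT: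
  fixes f :: "nat \<Rightarrow> real \<Rightarrow> complex"
  assumes A: "A \<in> sets lborel" "emeasure lborel A < \<infinity>"
    and fm: "\<And>k. f k \<in> borel_measurable borel" and gm: "g \<in> borel_measurable borel"
    and bnd: "\<And>k x. x \<in> A \<Longrightarrow> norm (f k x) \<le> B"
    and conv: "AE x in lborel. x \<in> A \<longrightarrow> (\<lambda>k. f k x) \<longlonglongrightarrow> g x"
  shows "(\<lambda>k. LINT x:A|lborel. f k x) \<longlonglongrightarrow> (LINT x:A|lborel. g x)"
  unfolding set_lebesgue_integral_def
proof (rule integral_dominated_convergence[where w="\<lambda>x. B * indicator A x"])
  show "(\<lambda>x. indicat_real A x *\<^sub>R g x) \<in> borel_measurable lborel"
    using gm A by simp
  show "(\<lambda>x. indicat_real A x *\<^sub>R f k x) \<in> borel_measurable lborel" for k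
    using fm A by simp
  show "integrable lborel (\<lambda>x. B * indicat_real A x)"
    using A by (intro integrable_mult_right integrable_real_indicator) auto
  show "AE x in lborel. (\<lambda>k. indicat_real A x *\<^sub>R f k x) \<longlonglongrightarrow> indicat_real A x *\<^sub>R g x"
    using conv by eventually_elim (auto simp: indicator_def)
  show "AE x in lborel. norm (indicat_real A x *\<^sub>R f k x) \<le> B * indicat_real A x" for k
    using bnd by (auto simp: indicator_def)
qed

lemma inner_bnd:
  fixes \<psi> :: "real \<Rightarrow> complex"
  assumes "\<psi> \<in> borel_measurable borel" "\<And>y. norm (\<psi> y) \<le> Bp" "b - a \<le> L" "0 \<le> L"
  shows "norm (LINT x:{a..b}|lborel. \<psi> x) \<le> Bp * L"
proof -
  have Bp: "0 \<le> Bp" using assms(2)[of 0] norm_ge_zero order_trans by blast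
  have si: "set_integrable lborel {a..b} \<psi>"
    by (rule set_integrable_bdd[where B=Bp]) (use assms in auto)
  show ?thesis
    unfolding set_borel_integral_eq_integral(2)[OF si]
    by (rule hk_bound) (use assms Bp in auto)
qed

lemma ev_tendsto: "eventually (\<lambda>k. f k = c) sequentially \<Longrightarrow> f \<longlonglongrightarrow> c"
  by (rule tendsto_eventually) 

lemma Zf_conv:
  fixes g h :: "real \<Rightarrow> int \<times> int" and hk :: "nat \<Rightarrow> real \<Rightarrow> int \<times> int"
  assumes g: "g \<in> borel \<rightarrow>\<^sub>M count_space UNIV" and h: "h \<in> borel \<rightarrow>\<^sub>M count_space UNIV"
    and hkm: "\<And>k. hk k \<in> borel \<rightarrow>\<^sub>M count_space UNIV"
    and gs: "\<And>x. g x \<in> spins \<times> spins" and hs: "\<And>x. h x \<in> spins \<times> spins"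
    and hks: "\<And>k x. hk k x \<in> spins \<times> spins"
    and E: "finite E" and ev: "\<And>x. x \<notin> E \<Longrightarrow> 0 \<le> x \<Longrightarrow> x \<le> T \<Longrightarrow> eventually (\<lambda>k. hk k x = h x) sequentially"
    and eta: "\<eta> \<in> borel_measurable borel" and eb: "\<And>s. norm (\<eta> s) \<le> Eb"
    and t: "0 \<le> t" and T: "0 \<le> T"
  shows "(\<lambda>k. Zf \<eta> T t g (hk k)) \<longlonglongrightarrow> Zf \<eta> T t g h"
proof -
  have Eb: "0 \<le> Eb" using eb[of 0] norm_ge_zero order_trans by blast
  have Zk: "Zf \<eta> T t g (hk k) = - ZL1 \<eta> T t g - ZL2 \<eta> T t g (hk k) - ZL3 \<eta> T (hk k)" for k
    by (rule Zf_eq[OF g hkm gs hks eta eb t T])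
  have Z: "Zf \<eta> T t g h = - ZL1 \<eta> T t g - ZL2 \<eta> T t g h - ZL3 \<eta> T h"
    by (rule Zf_eq[OF g h gs hs eta eb t T])
  have pm: "(\<lambda>x. pdiff (f x)) \<in> borel_measurable borel" if "f \<in> borel \<rightarrow>\<^sub>M count_space UNIV" for f :: "real \<Rightarrow> int \<times> int"
    using that by (rule pdiff_meas)
  have pm': "(\<lambda>x. pdiff (f (x - t))) \<in> borel_measurable borel" if "f \<in> borel \<rightarrow>\<^sub>M count_space UNIV" for f :: "real \<Rightarrow> int \<times> int"
    using measurable_compose[OF _ pm[OF that], of "\<lambda>x. x - t"] by simp
  have pkm: "(\<lambda>x2. pker \<eta> (f x2) (x1 - x2)) \<in> borel_measurable borel" if "f \<in> borel \<rightarrow>\<^sub>M count_space UNIV" for f :: "real \<Rightarrow> int \<times> int" and x1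
    by (rule pker_meas[OF that _ eta]) simp
  have AEE: "AE x in lborel. x \<notin> F" if "finite F" for F :: "real set"
    using finite_imp_null_set_lborel[OF that] AE_not_in by blast
  define I2 where "I2 = (\<lambda>x1. LINT x2:{max 0 (x1 - T)..t}|lborel. pker \<eta> (g x2) (x1 - x2))"
  have I2m: "I2 \<in> borel_measurable borel"
    unfolding I2_def by (rule inner_meas) (use psi_meas[OF g eta] in auto)
  have I2b: "norm (I2 x1) \<le> 2 * Eb * t" for x1
    unfolding I2_def by (rule inner_bnd) (use pkm[OF g] pker_bound[OF gs eb] t in auto)
  have Z2e: "ZL2 \<eta> T t g f = (LINT x1:{t..t + T}|lborel. pdiff (f (x1 - t)) * I2 x1)" for f
    by (simp add: ZL2_def I2_def)
  have c2: "(\<lambda>k. ZL2 \<eta> T t g (hk k)) \<longlonglongrightarrow> ZL2 \<eta> T t g h"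
    unfolding Z2e
  proof (rule set_DCT[where B="2 * (2 * Eb * t)"])
    show "(\<lambda>x1. pdiff (hk k (x1 - t)) * I2 x1) \<in> borel_measurable borel" for k
      using pm'[OF hkm] I2m by simp
    show "(\<lambda>x1. pdiff (h (x1 - t)) * I2 x1) \<in> borel_measurable borel"
      using pm'[OF h] I2m by simp
    show "norm (pdiff (hk k (x - t)) * I2 x) \<le> 2 * (2 * Eb * t)" for k x
      unfolding norm_mult using pdiff_bound[OF hks] I2b Eb t by (intro mult_mono) auto
    show "AE x in lborel. x \<in> {t..t + T} \<longrightarrow> (\<lambda>k. pdiff (hk k (x - t)) * I2 x) \<longlonglongrightarrow> pdiff (h (x - t)) * I2 x"
      using AEE[OF finite_imageI[OF E, of "\<lambda>e. e + t"]]
    proof eventually_elim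
      case (elim x)
      show ?case
      proof
        assume "x \<in> {t..t + T}"
        moreover have "x - t \<notin> E" using elim by force
        ultimately have "eventually (\<lambda>k. hk k (x - t) = h (x - t)) sequentially"
          by (intro ev) auto
        then have "eventually (\<lambda>k. pdiff (hk k (x - t)) * I2 x = pdiff (h (x - t)) * I2 x) sequentially"
          by eventually_elim simp
        then show "(\<lambda>k. pdiff (hk k (x - t)) * I2 x) \<longlonglongrightarrow> pdiff (h (x - t)) * I2 x"
          by (rule ev_tendsto)
      qed
    qed
  qed (auto simp: Icc_finite_measure)
  define I3 where "I3 = (\<lambda>f x1. LINT x2:{0..x1}|lborel. pker \<eta> (f x2) (x1 - x2))"
  have I3m: "I3 f \<in> borel_measurable borel" if "f \<in> borel \<rightarrow>\<^sub>M count_space UNIV" for f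
    unfolding I3_def by (rule inner_meas) (use psi_meas[OF that eta] in auto)
  have I3b: "norm (I3 f x1) \<le> 2 * Eb * T" if "\<And>x. f x \<in> spins \<times> spins" "f \<in> borel \<rightarrow>\<^sub>M count_space UNIV" "x1 \<le> T" for f x1
    unfolding I3_def by (rule inner_bnd) (use pkm[OF that(2)] pker_bound[OF that(1) eb] T that(3) in auto)
  have I3c: "(\<lambda>k. I3 (hk k) x1) \<longlonglongrightarrow> I3 h x1" if "x1 \<le> T" for x1
    unfolding I3_def
  proof (rule set_DCT[where B="2 * Eb"])
    show "AE x in lborel. x \<in> {0..x1} \<longrightarrow> (\<lambda>k. pker \<eta> (hk k x) (x1 - x)) \<longlonglongrightarrow> pker \<eta> (h x) (x1 - x)"
      using AEE[OF E]
    proof eventually_elim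
      case (elim x)
      show ?case
      proof
        assume "x \<in> {0..x1}"
        then have "eventually (\<lambda>k. hk k x = h x) sequentially"
          using elim that by (intro ev) auto
        then have "eventually (\<lambda>k. pker \<eta> (hk k x) (x1 - x) = pker \<eta> (h x) (x1 - x)) sequentially"
          by eventually_elim simp
        then show "(\<lambda>k. pker \<eta> (hk k x) (x1 - x)) \<longlonglongrightarrow> pker \<eta> (h x) (x1 - x)"
          by (rule ev_tendsto)
      qed
    qed
  qed (use pkm[OF hkm] pkm[OF h] pker_bound[OF hks eb] in \<open>auto simp: Icc_finite_measure\<close>)
  have Z3e: "ZL3 \<eta> T f = (LINT x1:{0..T}|lborel. pdiff (f x1) * I3 f x1)" for f
    by (simp add: ZL3_def I3_def)
  have c3: "(\<lambda>k. ZL3 \<eta> T (hk k)) \<longlonglongrightarrow> ZL3 \<eta> T h"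
    unfolding Z3e
  proof (rule set_DCT[where B="2 * (2 * Eb * T)"])
    show "(\<lambda>x1. pdiff (hk k x1) * I3 (hk k) x1) \<in> borel_measurable borel" for k
      using pm[OF hkm] I3m[OF hkm] by simp
    show "(\<lambda>x1. pdiff (h x1) * I3 h x1) \<in> borel_measurable borel"
      using pm[OF h] I3m[OF h] by simp
    show "norm (pdiff (hk k x) * I3 (hk k) x) \<le> 2 * (2 * Eb * T)" if "x \<in> {0..T}" for k x
      unfolding norm_mult using pdiff_bound[OF hks] I3b[OF hks hkm] Eb T that by (intro mult_mono) auto
    show "AE x in lborel. x \<in> {0..T} \<longrightarrow> (\<lambda>k. pdiff (hk k x) * I3 (hk k) x) \<longlonglongrightarrow> pdiff (h x) * I3 h x"
      using AEE[OF E]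
    proof eventually_elim
      case (elim x)
      show ?case
      proof
        assume x: "x \<in> {0..T}"
        then have "eventually (\<lambda>k. hk k x = h x) sequentially"
          using elim by (intro ev) auto
        then have "eventually (\<lambda>k. pdiff (hk k x) = pdiff (h x)) sequentially"
          by eventually_elim simp
        then have "(\<lambda>k. pdiff (hk k x)) \<longlonglongrightarrow> pdiff (h x)" by (rule ev_tendsto)
        then show "(\<lambda>k. pdiff (hk k x) * I3 (hk k) x) \<longlonglongrightarrow> pdiff (h x) * I3 h x"
          using I3c x by (intro tendsto_mult) auto
      qed
    qed
  qed (auto simp: Icc_finite_measure)
  show ?thesis unfolding Zk Z
    by (intro tendsto_diff tendsto_const c2 c3)
qed



lemma space_PiM_lborel: "space (Pi\<^sub>M I (\<lambda>_. lborel)) = extensional I"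
  by (auto simp: space_PiM PiE_def Pi_def)

lemma tsimplex_sub: "tsimplex L n \<subseteq> space (Pi\<^sub>M {..<n} (\<lambda>_. lborel))"
  by (auto simp: tsimplex_def space_PiM_lborel)

lemma tsimplex_sets: "tsimplex L n \<in> sets (Pi\<^sub>M {..<n} (\<lambda>_. lborel))"
proof -
  have eq: "tsimplex L n = Pi\<^sub>E {..<n} (\<lambda>_. {0<..}) \<inter> (if 0 < n then (\<lambda>x. sum x {..<n}) -` {..<L} else UNIV)
      \<inter> space (Pi\<^sub>M {..<n} (\<lambda>_. lborel))"
    by (auto simp: tsimplex_def space_PiM_lborel PiE_def Pi_def)
  show ?thesis unfolding eq by measurable
qed

lemma tsimplex_emeasure:
  assumes "0 \<le> t"
  shows "emeasure (Pi\<^sub>M {..<n} (\<lambda>_. lborel)) (tsimplex t n) \<le> ennreal (t ^ n / fact n)"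
proof -
  let ?S = "{x. (\<forall>i\<in>{..<n}. 0 \<le> x i) \<and> sum x {..<n} \<le> t} \<inter> space (Pi\<^sub>M {..<n} (\<lambda>_. lborel))"
  have "?S = Pi\<^sub>E {..<n} (\<lambda>_. {0..}) \<inter> (\<lambda>x. sum x {..<n}) -` {..t} \<inter> space (Pi\<^sub>M {..<n} (\<lambda>_. lborel))"
    by (auto simp: space_PiM_lborel PiE_def Pi_def)
  also have "\<dots> \<in> sets (Pi\<^sub>M {..<n} (\<lambda>_. lborel))" by measurable
  finally have Ss: "?S \<in> sets (Pi\<^sub>M {..<n} (\<lambda>_. lborel))" .
  have sub: "tsimplex t n \<subseteq> ?S"
  proof
    fix x assume x: "x \<in> tsimplex t n"
    then have "sum x {..<n} \<le> t" using assms
      by (cases "n = 0") (auto simp: tsimplex_def)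
    then show "x \<in> ?S" using x tsimplex_sub[of t n] by (auto simp: tsimplex_def)
  qed
  have "emeasure (Pi\<^sub>M {..<n} (\<lambda>_. lborel)) (tsimplex t n) \<le> emeasure (Pi\<^sub>M {..<n} (\<lambda>_. lborel)) ?S"
    by (rule emeasure_mono[OF sub Ss])
  also have "\<dots> = ennreal (t ^ n / fact n)"
    using emeasure_std_simplex_aux[of "{..<n}" t] assms by simp
  finally show ?thesis .
qed

lemma tsimplex_finite: "0 \<le> t \<Longrightarrow> emeasure (Pi\<^sub>M {..<n} (\<lambda>_. lborel)) (tsimplex t n) < \<infinity>"
  using tsimplex_emeasure[of t n] by (auto simp: top_unique less_top[symmetric] intro: le_less_trans)

lemma tsimplex_measure:
  assumes "0 \<le> t"
  shows "measure (Pi\<^sub>M {..<n} (\<lambda>_. lborel)) (tsimplex t n) \<le> t ^ n / fact n"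
proof -
  have "enn2real (emeasure (Pi\<^sub>M {..<n} (\<lambda>_. lborel)) (tsimplex t n)) \<le> enn2real (ennreal (t ^ n / fact n))"
    by (rule enn2real_mono[OF tsimplex_emeasure[OF assms]]) simp
  then show ?thesis using assms by (simp add: measure_def)
qed

lemma LINT_bound:
  fixes f :: "'a \<Rightarrow> complex"
  assumes A: "A \<in> sets M" "emeasure M A < \<infinity>" and C: "0 \<le> C" and b: "\<And>x. x \<in> A \<Longrightarrow> norm (f x) \<le> C"
  shows "norm (LINT x:A|M. f x) \<le> C * measure M A"
proof (cases "set_integrable M A f")
  case True
  have "norm (LINT x:A|M. f x) \<le> (LINT x:A|M. norm (f x))"
    by (rule set_integral_norm_bound[OF True])
  also have "\<dots> \<le> (LINT x:A|M. C)"
  proof (rule set_integral_mono)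
    show "set_integrable M A (\<lambda>x. norm (f x))" using True by (rule set_integrable_norm)
    show "set_integrable M A (\<lambda>x. C)"
      by (rule set_integrable_bdd[where B=C]) (use A C in auto)
  qed (use b in auto)
  also have "\<dots> = C * measure M A"
    using A by (simp add: set_integral_const)
  finally show ?thesis .
next
  case False
  then have "(LINT x:A|M. f x) = 0"
    unfolding set_lebesgue_integral_def set_integrable_def by (simp add: not_integrable_integral_eq)
  then show ?thesis using C by simp
qed



definition Hm :: "(int \<Rightarrow> int \<Rightarrow> complex) \<Rightarrow> real" where
  "Hm H = (\<Sum>a\<in>spins. \<Sum>b\<in>spins. norm (H a b))"

lemma finite_spins[simp]: "finite spins" by (simp add: spins_def)

lemma Hm_bound: "a \<in> spins \<Longrightarrow> b \<in> spins \<Longrightarrow> norm (H a b) \<le> Hm H"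
proof -
  assume ab: "a \<in> spins" "b \<in> spins"
  have "norm (H a b) \<le> (\<Sum>b\<in>spins. norm (H a b))"
    using ab by (intro member_le_sum) auto
  also have "\<dots> \<le> Hm H" unfolding Hm_def
    using ab by (intro member_le_sum[where f="\<lambda>a. \<Sum>b\<in>spins. norm (H a b)"] sum_nonneg) auto
  finally show ?thesis .
qed

lemma Hm_nonneg: "0 \<le> Hm H"
  unfolding Hm_def by (intro sum_nonneg) auto

lemma Eng_bound: "r \<in> spins \<times> spins \<Longrightarrow> norm (Eng H r) \<le> 2 * Hm H"
  unfolding Eng_def using Hm_bound[of "fst r" "fst r" H] Hm_bound[of "snd r" "snd r" H]
  by (auto intro!: order_trans[OF norm_triangle_ineq4])

lemma flip_factor_bound:
  assumes "r0 \<in> spins \<times> spins"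
  shows "norm (flip_factor H r0 sg j) \<le> Hm H"
  using Hm_bound[of "fst (states r0 sg j)" "fst (states r0 sg (j - 1))" H]
    Hm_bound[of "snd (states r0 sg (j - 1))" "snd (states r0 sg j)" H]
    states_spins[OF assms, of sg j] states_spins[OF assms, of sg "j - 1"]
  unfolding flip_factor_def by (auto simp: norm_mult)

lemma piece_len_bound:
  assumes "\<tau> \<in> tsimplex t (length sg)" "0 \<le> t" "j \<le> length sg"
  shows "0 \<le> piece_len t sg \<tau> j \<and> piece_len t sg \<tau> j \<le> t"
proof -
  let ?n = "length sg"
  have pos: "\<And>k. k < ?n \<Longrightarrow> 0 < \<tau> k" using assms by (auto simp: tsimplex_def)
  have s0: "0 \<le> sum \<tau> {..<?n}" using pos by (intro sum_nonneg) (auto intro: less_imp_le)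
  have st: "sum \<tau> {..<?n} \<le> t" using assms by (cases "?n = 0") (auto simp: tsimplex_def)
  show ?thesis
  proof (cases "j < ?n")
    case True
    have "\<tau> j \<le> sum \<tau> {..<?n}"
      using True pos by (intro member_le_sum) (auto intro: less_imp_le)
    then show ?thesis using True pos st by (auto simp: piece_len_def intro: less_imp_le)
  next
    case False
    then show ?thesis using s0 st by (auto simp: piece_len_def)
  qed
qed

definition Xb :: "(int \<Rightarrow> int \<Rightarrow> complex) \<Rightarrow> (int \<Rightarrow> int \<Rightarrow> complex) \<Rightarrow> real \<Rightarrow> nat \<Rightarrow> real" where
  "Xb H \<rho> t n = Hm \<rho> * exp (2 * Hm H * t) ^ (n + 1) * Hm H ^ n"

lemma seg_amp_bound:
  assumes r0: "r0 \<in> spins \<times> spins" and \<tau>: "\<tau> \<in> tsimplex t (length sg)" and t: "0 \<le> t"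
  shows "norm (seg_amp H t r0 sg \<tau>) \<le> exp (2 * Hm H * t) ^ (length sg + 1) * Hm H ^ length sg"
proof -
  let ?n = "length sg"
  have e: "norm (exp (- \<i> * Eng H (states r0 sg j) * complex_of_real (piece_len t sg \<tau> j))) \<le> exp (2 * Hm H * t)"
    if "j \<in> {0..?n}" for j
  proof -
    have pl: "0 \<le> piece_len t sg \<tau> j \<and> piece_len t sg \<tau> j \<le> t"
      using piece_len_bound[OF \<tau> t] that by auto
    have "norm (- \<i> * Eng H (states r0 sg j) * complex_of_real (piece_len t sg \<tau> j))
        = norm (Eng H (states r0 sg j)) * piece_len t sg \<tau> j"
      using pl by (simp add: norm_mult)
    also have "\<dots> \<le> 2 * Hm H * t"
      using Eng_bound[OF states_spins[OF r0]] pl Hm_nonneg by (intro mult_mono) auto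
    finally have "norm (- \<i> * Eng H (states r0 sg j) * complex_of_real (piece_len t sg \<tau> j)) \<le> 2 * Hm H * t" .
    then show ?thesis using norm_exp[of "- \<i> * Eng H (states r0 sg j) * complex_of_real (piece_len t sg \<tau> j)"]
      by (meson exp_le_cancel_iff order_trans)
  qed
  have "norm (\<Prod>j\<in>{0..?n}. exp (- \<i> * Eng H (states r0 sg j) * complex_of_real (piece_len t sg \<tau> j)))
      \<le> (\<Prod>j\<in>{0..?n}. exp (2 * Hm H * t))"
    unfolding prod_norm[symmetric] by (intro prod_mono) (use e in auto)
  also have "\<dots> = exp (2 * Hm H * t) ^ (?n + 1)" by simp
  finally have p1: "norm (\<Prod>j\<in>{0..?n}. exp (- \<i> * Eng H (states r0 sg j) * complex_of_real (piece_len t sg \<tau> j)))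
      \<le> exp (2 * Hm H * t) ^ (?n + 1)" .
  have "norm (\<Prod>j\<in>{1..?n}. flip_factor H r0 sg j) \<le> (\<Prod>j\<in>{1..?n}. Hm H)"
    unfolding prod_norm[symmetric] by (intro prod_mono) (use flip_factor_bound[OF r0] in auto)
  also have "\<dots> = Hm H ^ ?n" by simp
  finally have p2: "norm (\<Prod>j\<in>{1..?n}. flip_factor H r0 sg j) \<le> Hm H ^ ?n" .
  show ?thesis unfolding seg_amp_def norm_mult
    by (intro mult_mono p1 p2) auto
qed

lemma Xf_bound:
  assumes r0: "r0 \<in> spins \<times> spins" and \<tau>: "\<tau> \<in> tsimplex t (length sg)" and t: "0 \<le> t"
  shows "norm (Xf H \<rho> t r0 sg \<tau>) \<le> Xb H \<rho> t (length sg)"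
proof -
  have "norm (Xf H \<rho> t r0 sg \<tau>) = norm (\<rho> (fst r0) (snd r0)) * norm (seg_amp H t r0 sg \<tau>)"
    by (simp add: Xf_def norm_mult)
  also have "\<dots> \<le> Hm \<rho> * (exp (2 * Hm H * t) ^ (length sg + 1) * Hm H ^ length sg)"
    using Hm_bound[of "fst r0" "snd r0" \<rho>] r0 seg_amp_bound[OF r0 \<tau> t, of H]
    by (intro mult_mono) (auto simp: Hm_nonneg)
  finally show ?thesis by (simp add: Xb_def mult.assoc)
qed

lemma Zf_bound:
  assumes gs: "\<And>x. g x \<in> spins \<times> spins" and hs: "\<And>x. h x \<in> spins \<times> spins"
    and eb: "\<And>s. norm (\<eta> s) \<le> Eb" and t: "0 \<le> t" and T: "0 \<le> T"
  shows "norm (Zf \<eta> T t g h) \<le> 4 * Eb * (t * t + t * T + T * T)"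
proof -
  have Eb: "0 \<le> Eb" using eb[of 0] norm_ge_zero order_trans by blast
  have pp: "norm (pdiff (f1 x) * pker \<eta> (f2 y) s) \<le> 4 * Eb" if "\<And>x. f1 x \<in> spins \<times> spins" "\<And>x. f2 x \<in> spins \<times> spins"
    for f1 f2 :: "real \<Rightarrow> int \<times> int" and x y s
  proof -
    have "norm (pdiff (f1 x)) * norm (pker \<eta> (f2 y) s) \<le> 2 * (2 * Eb)"
      by (rule mult_mono) (use pdiff_bound[OF that(1)] pker_bound[OF that(2) eb] in auto)
    then show ?thesis by (simp add: norm_mult)
  qed
  have in1: "norm (integral {max 0 (x1 - T)..x1} (\<lambda>x2. pdiff (g x1) * pker \<eta> (g x2) (x1 - x2))) \<le> 4 * Eb * t"
    if "x1 \<in> {0..t}" for x1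
    by (rule hk_bound) (use pp[OF gs gs] Eb that t in auto)
  have b1: "norm (integral {0..t} (\<lambda>x1. integral {max 0 (x1 - T)..x1} (\<lambda>x2. pdiff (g x1) * pker \<eta> (g x2) (x1 - x2))))
      \<le> (4 * Eb * t) * t"
    by (rule hk_bound) (use in1 Eb t in auto)
  have in2: "norm (integral {max 0 (x1 - T)..t} (\<lambda>x2. pdiff (h (x1 - t)) * pker \<eta> (g x2) (x1 - x2))) \<le> 4 * Eb * t"
    for x1
    by (rule hk_bound) (use pp[OF hs gs] Eb t in auto)
  have b2: "norm (integral {t..t + T} (\<lambda>x1. integral {max 0 (x1 - T)..t} (\<lambda>x2. pdiff (h (x1 - t)) * pker \<eta> (g x2) (x1 - x2))))
      \<le> (4 * Eb * t) * T"
    by (rule hk_bound) (use in2 Eb t T in auto)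
  have in3: "norm (integral {0..x1} (\<lambda>x2. pdiff (h x1) * pker \<eta> (h x2) (x1 - x2))) \<le> 4 * Eb * T"
    if "x1 \<in> {0..T}" for x1
    by (rule hk_bound) (use pp[OF hs hs] Eb that T in auto)
  have b3: "norm (integral {0..T} (\<lambda>x1. integral {0..x1} (\<lambda>x2. pdiff (h x1) * pker \<eta> (h x2) (x1 - x2))))
      \<le> (4 * Eb * T) * T"
    by (rule hk_bound) (use in3 Eb T in auto)
  have tri: "norm (- a - b - c) \<le> norm a + norm b + norm c" for a b c :: complex
  proof -
    have "- a - b - c = - (a + b + c)" by simp
    then have "norm (- a - b - c) = norm (a + b + c)" by (simp only: norm_minus_cancel)
    also have "\<dots> \<le> norm (a + b) + norm c" by (rule norm_triangle_ineq)
    also have "\<dots> \<le> norm a + norm b + norm c" using norm_triangle_ineq[of a b] by simp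
    finally show ?thesis .
  qed
  have "norm (Zf \<eta> T t g h) \<le> (4 * Eb * t) * t + (4 * Eb * t) * T + (4 * Eb * T) * T"
    unfolding Zf_def by (rule order_trans[OF tri]) (use b1 b2 b3 in linarith)
  then show ?thesis by (simp add: algebra_simps)
qed



lemma piece_len_meas[measurable]:
  "(\<lambda>\<tau>. piece_len L sg \<tau> j) \<in> borel_measurable (Pi\<^sub>M {..<length sg} (\<lambda>_. lborel))"
proof (cases "j < length sg")
  case True
  have "(\<lambda>\<tau>. \<tau> j) \<in> borel_measurable (Pi\<^sub>M {..<length sg} (\<lambda>_. lborel))"
    using measurable_component_singleton[of j "{..<length sg}" "\<lambda>_. lborel"] True by simp
  then show ?thesis using True by (simp add: piece_len_def)
next
  case False
  have c: "(\<lambda>\<tau>. \<tau> k) \<in> borel_measurable (Pi\<^sub>M {..<length sg} (\<lambda>_. lborel))" if "k \<in> {..<length sg}" for k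
    using measurable_component_singleton[of k "{..<length sg}" "\<lambda>_. lborel"] that by simp
  have "(\<lambda>\<tau>. \<Sum>k\<in>{..<length sg}. \<tau> k) \<in> borel_measurable (Pi\<^sub>M {..<length sg} (\<lambda>_. lborel))"
    by (rule borel_measurable_sum) (rule c)
  then show ?thesis using False by (simp add: piece_len_def)
qed

lemma Xf_meas:
  "(\<lambda>\<tau>. Xf H \<rho> t r0 sg \<tau>) \<in> borel_measurable (Pi\<^sub>M {..<length sg} (\<lambda>_. lborel))"
  unfolding Xf_def seg_amp_def by measurable

lemma Zf_param_meas:
  assumes r0: "r0 \<in> spins \<times> spins" and h: "h \<in> borel \<rightarrow>\<^sub>M count_space UNIV" and hs: "\<And>x. h x \<in> spins \<times> spins"
    and eta: "\<eta> \<in> borel_measurable borel" and eb: "\<And>s. norm (\<eta> s) \<le> Eb"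
    and t: "0 \<le> t" and T: "0 \<le> T"
  shows "(\<lambda>\<tau>. Zf \<eta> T t (path_seg r0 sg \<tau>) h) \<in> borel_measurable (Pi\<^sub>M {..<length sg} (\<lambda>_. lborel))"
proof -
  let ?N = "Pi\<^sub>M {..<length sg} (\<lambda>_. borel :: real measure)"
  have G: "(\<lambda>w. path_seg r0 sg (fst w) (snd w)) \<in> (?N \<Otimes>\<^sub>M borel) \<rightarrow>\<^sub>M count_space UNIV"
    using path_seg_meas_param[of r0 sg] by (simp add: case_prod_beta')
  have m: "(\<lambda>\<tau>. - ZL1 \<eta> T t (path_seg r0 sg \<tau>) - ZL2 \<eta> T t (path_seg r0 sg \<tau>) h - ZL3 \<eta> T h) \<in> borel_measurable ?N"
    using ZL_param_meas[OF G h eta, of T t] by measurable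
  have "(\<lambda>\<tau>. Zf \<eta> T t (path_seg r0 sg \<tau>) h) \<in> borel_measurable ?N"
    by (subst measurable_cong[where g="\<lambda>\<tau>. - ZL1 \<eta> T t (path_seg r0 sg \<tau>) - ZL2 \<eta> T t (path_seg r0 sg \<tau>) h - ZL3 \<eta> T h"])
       (auto intro!: Zf_eq path_seg_meas path_seg_spins r0 h hs eta eb t T m)
  then show ?thesis
    by (subst measurable_cong_sets[OF PiM_lborel_sets1 refl])
qed

lemma set_DCT_gen:
  fixes f :: "nat \<Rightarrow> 'a \<Rightarrow> complex"
  assumes A: "A \<in> sets M" "emeasure M A < \<infinity>"
    and fm: "\<And>k. f k \<in> borel_measurable M" and gm: "g \<in> borel_measurable M"
    and bnd: "\<And>k x. x \<in> A \<Longrightarrow> norm (f k x) \<le> B"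
    and conv: "\<And>x. x \<in> A \<Longrightarrow> (\<lambda>k. f k x) \<longlonglongrightarrow> g x"
  shows "(\<lambda>k. LINT x:A|M. f k x) \<longlonglongrightarrow> (LINT x:A|M. g x)"
  unfolding set_lebesgue_integral_def
proof (rule integral_dominated_convergence[where w="\<lambda>x. B * indicator A x"])
  show "(\<lambda>x. indicat_real A x *\<^sub>R g x) \<in> borel_measurable M"
    using gm A by measurable
  show "(\<lambda>x. indicat_real A x *\<^sub>R f k x) \<in> borel_measurable M" for k
    using fm A by measurable
  show "integrable M (\<lambda>x. B * indicat_real A x)"
    using A by (intro integrable_mult_right integrable_real_indicator) auto
  show "AE x in M. (\<lambda>k. indicat_real A x *\<^sub>R f k x) \<longlonglongrightarrow> indicat_real A x *\<^sub>R g x"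
    using conv by (intro AE_I2) (auto simp: indicator_def)
  show "AE x in M. norm (indicat_real A x *\<^sub>R f k x) \<le> B * indicat_real A x" for k
    using bnd by (intro AE_I2) (auto simp: indicator_def)
qed

lemma Xb_nonneg: "0 \<le> Xb H \<rho> t n" unfolding Xb_def by (simp add: Hm_nonneg)

definition Zm :: "real \<Rightarrow> real \<Rightarrow> real \<Rightarrow> real" where
  "Zm Eb T t = 4 * Eb * (t * t + t * T + T * T)"

lemma term_conv:
  fixes hk :: "nat \<Rightarrow> real \<Rightarrow> int \<times> int"
  assumes r0: "rt0 \<in> spins \<times> spins" and n: "length sgt = n"
    and h: "h \<in> borel \<rightarrow>\<^sub>M count_space UNIV" and hkm: "\<And>k. hk k \<in> borel \<rightarrow>\<^sub>M count_space UNIV"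
    and hs: "\<And>x. h x \<in> spins \<times> spins" and hks: "\<And>k x. hk k x \<in> spins \<times> spins"
    and E: "finite E" and ev: "\<And>x. x \<notin> E \<Longrightarrow> 0 \<le> x \<Longrightarrow> x \<le> T \<Longrightarrow> eventually (\<lambda>k. hk k x = h x) sequentially"
    and eta: "\<eta> \<in> borel_measurable borel" and eb: "\<And>s. norm (\<eta> s) \<le> Eb"
    and t: "0 \<le> t" and T: "0 \<le> T"
  shows "(\<lambda>k. LINT \<tau> : tsimplex t n | Pi\<^sub>M {..<n} (\<lambda>_. lborel). Xf H \<rho> t rt0 sgt \<tau> * c * exp (Zf \<eta> T t (path_seg rt0 sgt \<tau>) (hk k)))
     \<longlonglongrightarrow> (LINT \<tau> : tsimplex t n | Pi\<^sub>M {..<n} (\<lambda>_. lborel). Xf H \<rho> t rt0 sgt \<tau> * c * exp (Zf \<eta> T t (path_seg rt0 sgt \<tau>) h))"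
proof (rule set_DCT_gen[where B="Xb H \<rho> t n * norm c * exp (Zm Eb T t)"])
  show "tsimplex t n \<in> sets (Pi\<^sub>M {..<n} (\<lambda>_. lborel))" by (rule tsimplex_sets)
  show "emeasure (Pi\<^sub>M {..<n} (\<lambda>_. lborel)) (tsimplex t n) < \<infinity>" using t by (rule tsimplex_finite)
  have [measurable]: "(\<lambda>\<tau>. Xf H \<rho> t rt0 sgt \<tau>) \<in> borel_measurable (Pi\<^sub>M {..<n} (\<lambda>_. lborel))"
    using Xf_meas[of H \<rho> t rt0 sgt] n by simp
  have [measurable]: "(\<lambda>\<tau>. Zf \<eta> T t (path_seg rt0 sgt \<tau>) f) \<in> borel_measurable (Pi\<^sub>M {..<n} (\<lambda>_. lborel))"
    if "f \<in> borel \<rightarrow>\<^sub>M count_space UNIV" "\<And>x. f x \<in> spins \<times> spins" for f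
    using Zf_param_meas[OF r0 that eta eb t T, where sg=sgt] n by simp
  have [measurable]: "exp \<in> borel_measurable (borel :: complex measure)"
    by (intro borel_measurable_continuous_onI continuous_intros)
  show "(\<lambda>\<tau>. Xf H \<rho> t rt0 sgt \<tau> * c * exp (Zf \<eta> T t (path_seg rt0 sgt \<tau>) (hk k))) \<in> borel_measurable (Pi\<^sub>M {..<n} (\<lambda>_. lborel))" for k
    using hkm hks by measurable
  show "(\<lambda>\<tau>. Xf H \<rho> t rt0 sgt \<tau> * c * exp (Zf \<eta> T t (path_seg rt0 sgt \<tau>) h)) \<in> borel_measurable (Pi\<^sub>M {..<n} (\<lambda>_. lborel))"
    using h hs by measurable
  show "norm (Xf H \<rho> t rt0 sgt \<tau> * c * exp (Zf \<eta> T t (path_seg rt0 sgt \<tau>) (hk k))) \<le> Xb H \<rho> t n * norm c * exp (Zm Eb T t)"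
    if "\<tau> \<in> tsimplex t n" for k \<tau>
  proof -
    have "norm (exp (Zf \<eta> T t (path_seg rt0 sgt \<tau>) (hk k))) \<le> exp (Zm Eb T t)"
      using norm_exp[of "Zf \<eta> T t (path_seg rt0 sgt \<tau>) (hk k)"]
        Zf_bound[OF path_seg_spins[OF r0, where sg=sgt and \<tau>=\<tau>] hks[of k] eb t T]
      unfolding Zm_def by (meson exp_le_cancel_iff order_trans)
    moreover have "norm (Xf H \<rho> t rt0 sgt \<tau>) \<le> Xb H \<rho> t n"
      using Xf_bound[OF r0 _ t, where sg=sgt and \<tau>=\<tau> and H=H and \<rho>=\<rho>] that n by simp
    ultimately show ?thesis unfolding norm_mult
      by (intro mult_mono) (auto simp: Xb_nonneg)
  qed
  show "(\<lambda>k. Xf H \<rho> t rt0 sgt \<tau> * c * exp (Zf \<eta> T t (path_seg rt0 sgt \<tau>) (hk k)))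
      \<longlonglongrightarrow> Xf H \<rho> t rt0 sgt \<tau> * c * exp (Zf \<eta> T t (path_seg rt0 sgt \<tau>) h)" for \<tau>
    by (intro tendsto_intros Zf_conv[OF path_seg_meas h hkm path_seg_spins[OF r0] hs hks E ev eta eb t T]) auto
qed



definition Bt where
  "Bt H \<rho> \<eta> T t r0 h Dt = (\<Sum>rt0\<in>spins \<times> spins. \<Sum>sgt\<in>{xs :: bool list. length xs = Dt}.
        LINT \<tau>t : tsimplex t Dt | Pi\<^sub>M {..<Dt} (\<lambda>_. lborel).
          Xf H \<rho> t rt0 sgt \<tau>t * (if final_state rt0 sgt = r0 then 1 else 0)
          * exp (Zf \<eta> T t (path_seg rt0 sgt \<tau>t) h))"

definition Mb where
  "Mb H \<rho> Eb T t n = 4 * 2 ^ n * (Xb H \<rho> t n * exp (Zm Eb T t) * (t ^ n / fact n))"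

lemma card_spins: "card (spins \<times> spins) = 4"
  by (simp add: spins_def card_cartesian_product)

lemma card_lists: "card {xs :: bool list. length xs = n} = 2 ^ n"
  using card_lists_length_eq[of "UNIV :: bool set" n] by simp

lemma finite_lists: "finite {xs :: bool list. length xs = n}"
  using finite_lists_length_eq[of "UNIV :: bool set" n] by simp

lemma Bt_bound:
  assumes hs: "\<And>x. h x \<in> spins \<times> spins" and eb: "\<And>s. norm (\<eta> s) \<le> Eb"
    and t: "0 \<le> t" and T: "0 \<le> T"
  shows "norm (Bt H \<rho> \<eta> T t r0 h n) \<le> Mb H \<rho> Eb T t n"
proof -
  let ?C = "Xb H \<rho> t n * exp (Zm Eb T t)"
  have C: "0 \<le> ?C" by (simp add: Xb_nonneg)
  have one: "norm (LINT \<tau>t : tsimplex t n | Pi\<^sub>M {..<n} (\<lambda>_. lborel).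
          Xf H \<rho> t rt0 sgt \<tau>t * (if final_state rt0 sgt = r0 then 1 else 0)
          * exp (Zf \<eta> T t (path_seg rt0 sgt \<tau>t) h)) \<le> ?C * (t ^ n / fact n)"
    if rt0: "rt0 \<in> spins \<times> spins" and sgt: "sgt \<in> {xs :: bool list. length xs = n}" for rt0 sgt
  proof -
    have "norm (LINT \<tau>t : tsimplex t n | Pi\<^sub>M {..<n} (\<lambda>_. lborel).
          Xf H \<rho> t rt0 sgt \<tau>t * (if final_state rt0 sgt = r0 then 1 else 0)
          * exp (Zf \<eta> T t (path_seg rt0 sgt \<tau>t) h)) \<le> ?C * measure (Pi\<^sub>M {..<n} (\<lambda>_. lborel)) (tsimplex t n)"
    proof (rule LINT_bound[OF tsimplex_sets tsimplex_finite[OF t] C])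
      fix \<tau> assume \<tau>: "\<tau> \<in> tsimplex t n"
      have "norm (exp (Zf \<eta> T t (path_seg rt0 sgt \<tau>) h)) \<le> exp (Zm Eb T t)"
        using norm_exp[of "Zf \<eta> T t (path_seg rt0 sgt \<tau>) h"]
          Zf_bound[OF path_seg_spins[OF rt0, where sg=sgt and \<tau>=\<tau>] hs eb t T]
        unfolding Zm_def by (meson exp_le_cancel_iff order_trans)
      moreover have "norm (Xf H \<rho> t rt0 sgt \<tau>) \<le> Xb H \<rho> t n"
        using Xf_bound[OF rt0 _ t, where sg=sgt and \<tau>=\<tau> and H=H and \<rho>=\<rho>] \<tau> sgt by simp
      moreover have "norm (if final_state rt0 sgt = r0 then 1 else 0 :: complex) \<le> 1" by simp
      ultimately have "norm (Xf H \<rho> t rt0 sgt \<tau> * (if final_state rt0 sgt = r0 then 1 else 0)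
          * exp (Zf \<eta> T t (path_seg rt0 sgt \<tau>) h)) \<le> Xb H \<rho> t n * 1 * exp (Zm Eb T t)"
        unfolding norm_mult by (intro mult_mono) (auto simp: Xb_nonneg)
      then show "norm (Xf H \<rho> t rt0 sgt \<tau> * (if final_state rt0 sgt = r0 then 1 else 0)
          * exp (Zf \<eta> T t (path_seg rt0 sgt \<tau>) h)) \<le> ?C" by simp
    qed
    also have "\<dots> \<le> ?C * (t ^ n / fact n)"
      by (intro mult_left_mono tsimplex_measure t C)
    finally show ?thesis .
  qed
  have "norm (Bt H \<rho> \<eta> T t r0 h n) \<le> (\<Sum>rt0\<in>spins \<times> spins. \<Sum>sgt\<in>{xs :: bool list. length xs = n}. ?C * (t ^ n / fact n))"
    unfolding Bt_def
  proof (rule order_trans[OF norm_sum sum_mono])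
    fix rt0 assume rt0: "rt0 \<in> spins \<times> spins"
    show "norm (\<Sum>sgt\<in>{xs :: bool list. length xs = n}.
        LINT \<tau>t : tsimplex t n | Pi\<^sub>M {..<n} (\<lambda>_. lborel).
          Xf H \<rho> t rt0 sgt \<tau>t * (if final_state rt0 sgt = r0 then 1 else 0)
          * exp (Zf \<eta> T t (path_seg rt0 sgt \<tau>t) h))
       \<le> (\<Sum>sgt\<in>{xs :: bool list. length xs = n}. ?C * (t ^ n / fact n))"
      by (rule order_trans[OF norm_sum sum_mono]) (rule one[OF rt0])
  qed
  also have "\<dots> = Mb H \<rho> Eb T t n"
    by (simp add: card_spins card_lists Mb_def)
  finally show ?thesis .
qed

lemma Mb_summable: "summable (Mb H \<rho> Eb T t)"
proof -
  define K where "K = 2 * exp (2 * Hm H * t) * Hm H * t"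
  define C0 where "C0 = 4 * Hm \<rho> * exp (2 * Hm H * t) * exp (Zm Eb T t)"
  have eq: "Mb H \<rho> Eb T t n = C0 * (K ^ n /\<^sub>R fact n)" for n
    by (simp add: Mb_def Xb_def K_def C0_def power_mult_distrib power_add mult_ac divide_inverse)
  show ?thesis unfolding eq[abs_def]
    by (intro summable_mult summable_exp_generic)
qed



lemma Bt_summable:
  assumes hs: "\<And>x. h x \<in> spins \<times> spins" and eb: "\<And>s. norm (\<eta> s) \<le> Eb"
    and t: "0 \<le> t" and T: "0 \<le> T"
  shows "summable (Bt H \<rho> \<eta> T t r0 h)"
  by (rule summable_comparison_test'[OF Mb_summable[of H \<rho> Eb T t], of 0]) (use Bt_bound[OF hs eb t T] in auto)

lemma LINT_pull:
  fixes f g :: "'a \<Rightarrow> complex"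
  shows "(LINT x:A|M. f x * c * Y * g x) = Y * (LINT x:A|M. f x * c * g x)"
proof -
  have "(\<lambda>x. f x * c * Y * g x) = (\<lambda>x. Y * (f x * c * g x))"
    by (auto simp: fun_eq_iff mult_ac)
  then show ?thesis by (simp add: set_integral_mult_right)
qed

lemma Aamp_factor:
  assumes sm: "summable (Bt H \<rho> \<eta> T t r0 (path_seg r0 sg \<tau>))"
  shows "Aamp H \<rho> \<eta> T sg r0 t \<tau> = Yf H T r0 sg \<tau> * suminf (Bt H \<rho> \<eta> T t r0 (path_seg r0 sg \<tau>))"
proof -
  have "Aamp H \<rho> \<eta> T sg r0 t \<tau> = (\<Sum>Dt. Yf H T r0 sg \<tau> * Bt H \<rho> \<eta> T t r0 (path_seg r0 sg \<tau>) Dt)"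
    unfolding Aamp_def Bt_def sum_distrib_left LINT_pull ..
  also have "\<dots> = Yf H T r0 sg \<tau> * suminf (Bt H \<rho> \<eta> T t r0 (path_seg r0 sg \<tau>))"
    by (rule suminf_mult[OF sm])
  finally show ?thesis .
qed

lemma Bt_conv:
  fixes hk :: "nat \<Rightarrow> real \<Rightarrow> int \<times> int"
  assumes h: "h \<in> borel \<rightarrow>\<^sub>M count_space UNIV" and hkm: "\<And>k. hk k \<in> borel \<rightarrow>\<^sub>M count_space UNIV"
    and hs: "\<And>x. h x \<in> spins \<times> spins" and hks: "\<And>k x. hk k x \<in> spins \<times> spins"
    and E: "finite E" and ev: "\<And>x. x \<notin> E \<Longrightarrow> 0 \<le> x \<Longrightarrow> x \<le> T \<Longrightarrow> eventually (\<lambda>k. hk k x = h x) sequentially"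
    and eta: "\<eta> \<in> borel_measurable borel" and eb: "\<And>s. norm (\<eta> s) \<le> Eb"
    and t: "0 \<le> t" and T: "0 \<le> T"
  shows "(\<lambda>k. suminf (Bt H \<rho> \<eta> T t r0 (hk k))) \<longlonglongrightarrow> suminf (Bt H \<rho> \<eta> T t r0 h)"
proof -
  have lim: "(\<lambda>k. Bt H \<rho> \<eta> T t r0 (hk k) n) \<longlonglongrightarrow> Bt H \<rho> \<eta> T t r0 h n" for n
    unfolding Bt_def
  proof (rule tendsto_sum, rule tendsto_sum)
    fix rt0 sgt assume rt0: "rt0 \<in> spins \<times> spins" and sgt: "sgt \<in> {xs :: bool list. length xs = n}"
    show "(\<lambda>k. LINT \<tau>t : tsimplex t n | Pi\<^sub>M {..<n} (\<lambda>_. lborel).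
          Xf H \<rho> t rt0 sgt \<tau>t * (if final_state rt0 sgt = r0 then 1 else 0)
          * exp (Zf \<eta> T t (path_seg rt0 sgt \<tau>t) (hk k)))
      \<longlonglongrightarrow> (LINT \<tau>t : tsimplex t n | Pi\<^sub>M {..<n} (\<lambda>_. lborel).
          Xf H \<rho> t rt0 sgt \<tau>t * (if final_state rt0 sgt = r0 then 1 else 0)
          * exp (Zf \<eta> T t (path_seg rt0 sgt \<tau>t) h))"
      by (rule term_conv[OF rt0 _ h hkm hs hks E ev eta eb t T]) (use sgt in auto)
  qed
  have bnd: "\<forall>\<^sub>F (k, n) in at_top \<times>\<^sub>F sequentially. norm (Bt H \<rho> \<eta> T t r0 (hk n) k) \<le> Mb H \<rho> Eb T t k"
    by (rule always_eventually) (simp add: case_prod_beta' Bt_bound[OF hks eb t T])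
  from tannerys_theorem[where a="\<lambda>k n. Bt H \<rho> \<eta> T t r0 (hk n) k" and F=sequentially, OF lim bnd Mb_summable]
  show ?thesis by simp
qed



lemma comp_tendsto:
  fixes X :: "nat \<Rightarrow> nat \<Rightarrow> real"
  assumes "X \<longlonglongrightarrow> l" shows "(\<lambda>k. X k i) \<longlonglongrightarrow> l i"
proof -
  have "isCont (\<lambda>x. x i) l"
    by (metis continuous_on_eq_continuous_at open_UNIV UNIV_I continuous_on_product_coordinates)
  from isCont_tendsto_compose[OF this assms] show ?thesis .
qed

lemma ev_lemma:
  fixes X :: "nat \<Rightarrow> nat \<Rightarrow> real"
  assumes X: "X \<longlonglongrightarrow> \<tau>(d := T - sum \<tau> {..<d})" and len: "length sg = Suc d"
    and xE: "x \<notin> (\<lambda>j. sum \<tau> {..<j}) ` {1..d} \<union> {T}" and x: "0 \<le> x" "x \<le> T"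
  shows "eventually (\<lambda>k. path_seg r0 sg (X k) x = path_seg r0 (take d sg) \<tau> x) sequentially"
proof -
  define xl where "xl = \<tau>(d := T - sum \<tau> {..<d})"
  have comp: "(\<lambda>k. sum (X k) {..<j}) \<longlonglongrightarrow> sum xl {..<j}" for j
    using X unfolding xl_def[symmetric] by (intro tendsto_sum comp_tendsto)
  have low: "sum xl {..<j} = sum \<tau> {..<j}" if "j \<le> d" for j
    using that by (intro sum.cong) (auto simp: xl_def)
  have top: "sum xl {..<Suc d} = T"
    using low[of d] by (simp add: xl_def)
  have ev1: "eventually (\<lambda>k. (sum (X k) {..<j} \<le> x) = (j \<le> d \<and> sum \<tau> {..<j} \<le> x)) sequentially"
    if j: "j \<in> {1..Suc d}" for j
  proof (cases "j \<le> d")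
    case True
    then have ne: "sum \<tau> {..<j} \<noteq> x" using xE j by auto
    show ?thesis
    proof (cases "sum \<tau> {..<j} < x")
      case True
      then have "sum xl {..<j} < x" using low[OF \<open>j \<le> d\<close>] by simp
      from order_tendstoD(2)[OF comp[of j] this]
      show ?thesis using \<open>j \<le> d\<close> True by (auto elim!: eventually_mono)
    next
      case False
      then have gx: "x < sum \<tau> {..<j}" using ne by auto
      then have "x < sum xl {..<j}" using low[OF \<open>j \<le> d\<close>] by auto
      from order_tendstoD(1)[OF comp[of j] this] show ?thesis
        using \<open>j \<le> d\<close> gx by (auto elim!: eventually_mono)
    qed
  next
    case False
    then have jd: "j = Suc d" using j by auto
    have "x < T" using xE x by auto
    then have "x < sum xl {..<j}" using top jd by simp
    from order_tendstoD(1)[OF comp[of j] this] show ?thesis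
      using False by (auto elim!: eventually_mono)
  qed
  have "eventually (\<lambda>k. \<forall>j\<in>{1..Suc d}. (sum (X k) {..<j} \<le> x) = (j \<le> d \<and> sum \<tau> {..<j} \<le> x)) sequentially"
    using ev1 by (intro eventually_ball_finite) auto
  then show ?thesis
  proof (rule eventually_mono)
    fix k assume H: "\<forall>j\<in>{1..Suc d}. (sum (X k) {..<j} \<le> x) = (j \<le> d \<and> sum \<tau> {..<j} \<le> x)"
    have seteq: "{j \<in> {1..length sg}. sum (X k) {..<j} \<le> x} = {j \<in> {1..length (take d sg)}. sum \<tau> {..<j} \<le> x}"
      using H len by auto
    have cd: "card {j \<in> {1..length (take d sg)}. sum \<tau> {..<j} \<le> x} \<le> d"
    proof -
      have "card {j \<in> {1..length (take d sg)}. sum \<tau> {..<j} \<le> x} \<le> card {1..d}"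
        by (rule card_mono) (use len in auto)
      then show ?thesis by simp
    qed
    show "path_seg r0 sg (X k) x = path_seg r0 (take d sg) \<tau> x"
      unfolding path_seg_def seteq
      by (rule states_cong) (use cd in auto)
  qed
qed

lemma states_take: "j \<le> d \<Longrightarrow> states r0 (take d sg) j = states r0 sg j"
  by (rule states_cong) auto

lemma flip_factor_take:
  assumes "j \<in> {1..d}" shows "flip_factor H r0 (take d sg) j = flip_factor H r0 sg j"
  using assms by (auto simp: flip_factor_def states_take)

lemma Yf_conv:
  fixes X :: "nat \<Rightarrow> nat \<Rightarrow> real"
  assumes X: "X \<longlonglongrightarrow> \<tau>(d := T - sum \<tau> {..<d})" and len: "length sg = Suc d"
  shows "(\<lambda>k. Yf H T r0 sg (X k)) \<longlonglongrightarrow> Yf H T r0 (take d sg) \<tau> * flip_factor H r0 sg (Suc d)"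
proof -
  define xl where "xl = \<tau>(d := T - sum \<tau> {..<d})"
  have Xc: "(\<lambda>k. X k j) \<longlonglongrightarrow> xl j" for j using comp_tendsto[OF X] by (simp add: xl_def)
  have low: "sum xl {..<d} = sum \<tau> {..<d}"
    by (intro sum.cong) (auto simp: xl_def)
  have top: "sum xl {..<Suc d} = T"
    using low by (simp add: xl_def)
  have lent: "length (take d sg) = d" using len by simp
  define e where "e = (\<lambda>s y j. exp (- \<i> * Eng H (states r0 sg j) * complex_of_real (piece_len T s y j)))"
  have Yk: "Yf H T r0 sg (X k) = ((\<Prod>j\<in>{0..d}. e sg (X k) j) * e sg (X k) (Suc d))
      * ((\<Prod>j\<in>{1..d}. flip_factor H r0 sg j) * flip_factor H r0 sg (Suc d))" for k
    unfolding Yf_def seg_amp_def len e_def by (simp add: prod.cl_ivl_Suc)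
  have Yl: "Yf H T r0 (take d sg) \<tau> = (\<Prod>j\<in>{0..d}. e (take d sg) \<tau> j) * (\<Prod>j\<in>{1..d}. flip_factor H r0 sg j)"
    unfolding Yf_def seg_amp_def lent e_def
    by (intro arg_cong2[where f="(*)"] prod.cong) (auto simp: states_take flip_factor_take)
  have pc: "(\<lambda>k. e sg (X k) j) \<longlonglongrightarrow> e (take d sg) \<tau> j" if "j \<in> {0..d}" for j
  proof -
    have "piece_len T (take d sg) \<tau> j = xl j"
      using that lent by (auto simp: piece_len_def xl_def)
    moreover have "piece_len T sg (X k) j = X k j" for k using that len by (simp add: piece_len_def)
    ultimately show ?thesis unfolding e_def
      by (simp only:) (intro tendsto_intros Xc)
  qed
  have pD: "(\<lambda>k. e sg (X k) (Suc d)) \<longlonglongrightarrow> 1"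
  proof -
    have l: "(\<lambda>k. piece_len T sg (X k) (Suc d)) \<longlonglongrightarrow> T - sum xl {..<Suc d}"
      unfolding piece_len_def len by simp (intro tendsto_intros Xc)
    have l0: "(\<lambda>k. piece_len T sg (X k) (Suc d)) \<longlonglongrightarrow> 0"
      using l unfolding top by simp
    have "(\<lambda>k. e sg (X k) (Suc d)) \<longlonglongrightarrow> exp (- \<i> * Eng H (states r0 sg (Suc d)) * complex_of_real 0)"
      unfolding e_def by (intro tendsto_intros l0)
    then show ?thesis by simp
  qed
  have "(\<lambda>k. ((\<Prod>j\<in>{0..d}. e sg (X k) j) * e sg (X k) (Suc d))
      * ((\<Prod>j\<in>{1..d}. flip_factor H r0 sg j) * flip_factor H r0 sg (Suc d)))
      \<longlonglongrightarrow> ((\<Prod>j\<in>{0..d}. e (take d sg) \<tau> j) * 1) * ((\<Prod>j\<in>{1..d}. flip_factor H r0 sg j) * flip_factor H r0 sg (Suc d))"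
    by (intro tendsto_mult tendsto_prod pc pD tendsto_const)
  then show ?thesis unfolding Yk Yl by (simp add: mult_ac)
qed

lemma V_eq:
  assumes len: "length sg = Suc d"
  shows "flip_factor H r0 sg (Suc d) =
    (if sg ! d then - \<i> * H (fst (final_state r0 sg)) (hat (fst (final_state r0 sg))) else 0)
    + (if \<not> sg ! d then \<i> * H (hat (snd (final_state r0 sg))) (snd (final_state r0 sg)) else 0)"
  using len by (auto simp: flip_factor_def final_state_def flip_def)

definition Ebd :: "'j set \<Rightarrow> ('j \<Rightarrow> real) \<Rightarrow> ('j \<Rightarrow> real) \<Rightarrow> ('j \<Rightarrow> real) \<Rightarrow> real \<Rightarrow> real" where
  "Ebd Jm c m \<omega> \<beta> = (\<Sum>j\<in>Jm. norm (complex_of_real (1 / pi * (pi / 2 * (c j)\<^sup>2 / (m j * \<omega> j))))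
      * (\<bar>cosh (\<beta> * \<omega> j / 2) / sinh (\<beta> * \<omega> j / 2)\<bar> + 1))"

lemma eta_bound: "norm (eta \<beta> Jm c m \<omega> s) \<le> Ebd Jm c m \<omega> \<beta>"
  unfolding eta_def Ebd_def
proof (rule order_trans[OF norm_sum sum_mono])
  fix j
  let ?a = "complex_of_real (1 / pi * (pi / 2 * (c j)\<^sup>2 / (m j * \<omega> j)))"
  let ?k = "cosh (\<beta> * \<omega> j / 2) / sinh (\<beta> * \<omega> j / 2)"
  have "norm (complex_of_real (?k * cos (\<omega> j * s)) - \<i> * complex_of_real (sin (\<omega> j * s)))
      \<le> norm (complex_of_real (?k * cos (\<omega> j * s))) + norm (\<i> * complex_of_real (sin (\<omega> j * s)))"
    by (rule norm_triangle_ineq4)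
  also have "\<dots> \<le> \<bar>?k\<bar> + 1"
  proof -
    have "\<bar>?k * cos (\<omega> j * s)\<bar> \<le> \<bar>?k\<bar> * 1"
      unfolding abs_mult by (intro mult_left_mono) auto
    then have a1: "norm (complex_of_real (?k * cos (\<omega> j * s))) \<le> \<bar>?k\<bar>"
      unfolding norm_of_real by simp
    have a2: "norm (\<i> * complex_of_real (sin (\<omega> j * s))) \<le> 1"
      by (simp add: norm_mult)
    from a1 a2 show ?thesis by linarith
  qed
  finally show "norm (?a * (complex_of_real (?k * cos (\<omega> j * s)) - \<i> * complex_of_real (sin (\<omega> j * s))))
      \<le> norm ?a * (\<bar>?k\<bar> + 1)"
    unfolding norm_mult by (intro mult_left_mono) auto
qed

lemma eta_meas: "eta \<beta> Jm c m \<omega> \<in> borel_measurable borel"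
proof -
  have "continuous_on UNIV (eta \<beta> Jm c m \<omega>)"
    unfolding eta_def by (intro continuous_intros)
  then show ?thesis by (rule borel_measurable_continuous_onI)
qed



theorem theorem4p2:
  fixes H0 \<rho>0 :: "int \<Rightarrow> int \<Rightarrow> complex"
    and Jm :: "'j set" and c m \<omega> :: "'j \<Rightarrow> real"
    and \<beta> T t :: real and D :: nat and sg :: "bool list"
    and \<tau> :: "nat \<Rightarrow> real" and rp rm :: int
  assumes herm: "\<forall>a\<in>spins. \<forall>b\<in>spins. H0 a b = cnj (H0 b a)"
    and finJ: "finite Jm" and om_pos: "\<forall>j\<in>Jm. 0 < \<omega> j"
    and beta_pos: "0 < \<beta>" and T_pos: "0 < T"
    and t_nonneg: "0 \<le> t"
    and D_ge: "1 \<le> D" and sg_len: "length sg = D"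
    and tau_in: "\<tau> \<in> tsimplex T (D - 1)"
    and r_in: "rp \<in> spins" "rm \<in> spins"
  shows
    "((\<lambda>\<tau>'. Aamp H0 \<rho>0 (eta \<beta> Jm c m \<omega>) T sg (rp, rm) t \<tau>')
       \<longlongrightarrow>
       Aamp H0 \<rho>0 (eta \<beta> Jm c m \<omega>) T (take (D - 1) sg) (rp, rm) t \<tau>
       * ((if sg ! (D - 1) then - \<i> * H0 (fst (final_state (rp, rm) sg)) (hat (fst (final_state (rp, rm) sg))) else 0)
          + (if \<not> sg ! (D - 1) then \<i> * H0 (hat (snd (final_state (rp, rm) sg))) (snd (final_state (rp, rm) sg)) else 0)))
     (at (\<tau>(D - 1 := T - (\<Sum>k<D - 1. \<tau> k))) within tsimplex T D)"
proof -
  define d where "d = D - 1"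
  have Dd: "D = Suc d" using D_ge by (simp add: d_def)
  have len: "length sg = Suc d" using sg_len Dd by simp
  define \<eta> where "\<eta> = eta \<beta> Jm c m \<omega>"
  define Eb where "Eb = Ebd Jm c m \<omega> \<beta>"
  have eb: "\<And>s. norm (\<eta> s) \<le> Eb" unfolding \<eta>_def Eb_def by (rule eta_bound)
  have eta: "\<eta> \<in> borel_measurable borel" unfolding \<eta>_def by (rule eta_meas)
  have T: "0 \<le> T" using T_pos by simp
  note t = t_nonneg
  define r0 where "r0 = (rp, rm)"
  have r0: "r0 \<in> spins \<times> spins" using r_in by (simp add: r0_def)
  define V where "V = flip_factor H0 r0 sg (Suc d)"
  have Veq: "V = (if sg ! d then - \<i> * H0 (fst (final_state r0 sg)) (hat (fst (final_state r0 sg))) else 0)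
          + (if \<not> sg ! d then \<i> * H0 (hat (snd (final_state r0 sg))) (snd (final_state r0 sg)) else 0)"
    unfolding V_def by (rule V_eq[OF len])
  define h where "h = path_seg r0 (take d sg) \<tau>"
  have hm: "h \<in> borel \<rightarrow>\<^sub>M count_space UNIV" unfolding h_def by (rule path_seg_meas)
  have hs: "\<And>x. h x \<in> spins \<times> spins" unfolding h_def by (rule path_seg_spins[OF r0])
  have Alim: "Aamp H0 \<rho>0 \<eta> T (take d sg) r0 t \<tau> = Yf H0 T r0 (take d sg) \<tau> * suminf (Bt H0 \<rho>0 \<eta> T t r0 h)"
    unfolding h_def by (rule Aamp_factor[OF Bt_summable[OF path_seg_spins[OF r0] eb t T]])
  define E where "E = (\<lambda>j. sum \<tau> {..<j}) ` {1..d} \<union> {T}"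
  have E: "finite E" unfolding E_def by simp
  show ?thesis
    unfolding \<eta>_def[symmetric] r0_def[symmetric] d_def[symmetric]
    unfolding Veq[symmetric] tendsto_at_iff_sequentially comp_def
  proof (intro allI impI)
    fix X :: "nat \<Rightarrow> nat \<Rightarrow> real"
    assume "\<forall>i. X i \<in> tsimplex T D - {\<tau>(d := T - (\<Sum>k<d. \<tau> k))}"
    assume X: "X \<longlonglongrightarrow> \<tau>(d := T - (\<Sum>k<d. \<tau> k))"
    define hk where "hk = (\<lambda>k. path_seg r0 sg (X k))"
    have hkm: "\<And>k. hk k \<in> borel \<rightarrow>\<^sub>M count_space UNIV" unfolding hk_def by (rule path_seg_meas)
    have hks: "\<And>k x. hk k x \<in> spins \<times> spins" unfolding hk_def by (rule path_seg_spins[OF r0])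
    have ev: "eventually (\<lambda>k. hk k x = h x) sequentially" if "x \<notin> E" "0 \<le> x" "x \<le> T" for x
      unfolding hk_def h_def by (rule ev_lemma[OF X len]) (use that in \<open>auto simp: E_def\<close>)
    have Ak: "Aamp H0 \<rho>0 \<eta> T sg r0 t (X k) = Yf H0 T r0 sg (X k) * suminf (Bt H0 \<rho>0 \<eta> T t r0 (hk k))" for k
      unfolding hk_def by (rule Aamp_factor[OF Bt_summable[OF path_seg_spins[OF r0] eb t T]])
    have "(\<lambda>k. Yf H0 T r0 sg (X k) * suminf (Bt H0 \<rho>0 \<eta> T t r0 (hk k)))
        \<longlonglongrightarrow> (Yf H0 T r0 (take d sg) \<tau> * V) * suminf (Bt H0 \<rho>0 \<eta> T t r0 h)"
      unfolding V_def
      by (intro tendsto_mult Yf_conv[OF X len] Bt_conv[OF hm hkm hs hks E ev eta eb t T]) auto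
    then show "(\<lambda>k. Aamp H0 \<rho>0 \<eta> T sg r0 t (X k)) \<longlonglongrightarrow> Aamp H0 \<rho>0 \<eta> T (take d sg) r0 t \<tau> * V"
      unfolding Ak Alim by (simp add: mult_ac)
  qed
qed


end
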